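(* There exist $r_0>0$ and $c<\infty$ such that the following holds. Let $K$ be a hull with $r=r_K\le r_0$, $h=h_K$, let $U\in[-(rh)^{1/3},(rh)^{1/3}]$, let $g=g_K$ and $z_\pm=i\pm1$. Then \[\operatorname{Im}[g(z_\pm)]=1-\frac h2+O(hr),\qquad |g'(z_\pm)|=1+O(hr),\] \[\sin[\arg(g(z_\pm)-U)]=\frac{\sqrt2}{2}\Big[1\pm\frac U2+\frac{U^2}{8}-\frac h2+O(hr+r^3)\Big],\] where $|O(x)|\le cx$.
   Context: A (compact $\mathbb H$-)hull is a bounded, relatively closed set $K\subset\mathbb H$ such that $\mathbb H\setminus K$ is simply connected; $g_K:\mathbb H\setminus K\to\mathbb H$ is the conformal map with $g_K(z)=z+h_K/z+O(|z|^{-2})$ at $\infty$, $h_K=\operatorname{hcap}(K)$, $r_K=\sup\{|z|:z\in K\}$. $\arg$ takes values in $(0,\pi)$ on $\mathbb H$. *)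

theory Defs
  imports "HOL-Analysis.Analysis"
begin

definition UHP :: "complex set" where
  "UHP = {z. Im z > 0}"

definition is_hull :: "complex set \<Rightarrow> bool" where
  "is_hull K \<longleftrightarrow> K \<subseteq> UHP \<and> bounded K \<and> closure K \<inter> UHP = K
      \<and> simply_connected (UHP - K)"

definition hull_rad :: "complex set \<Rightarrow> real" where
  "hull_rad K = Sup (insert 0 (norm ` K))"

text \<open>g is the mapping-out function g_K with half-plane capacity h:
  a conformal (holomorphic, injective) map of H minus K onto H with
  g(z) = z + h/z + O(|z|^(-2)) as z tends to infinity.\<close>
definition is_gK :: "complex set \<Rightarrow> (complex \<Rightarrow> complex) \<Rightarrow> real \<Rightarrow> bool" where
  "is_gK K g h \<longleftrightarrow> g holomorphic_on (UHP - K) \<and> inj_on g (UHP - K)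
      \<and> g ` (UHP - K) = UHP
      \<and> (\<exists>C R. \<forall>z \<in> UHP - K. norm z \<ge> R \<longrightarrow>
              norm (g z - z - of_real h / z) \<le> C / (norm z)^2)"

end

theory Submission
  imports Defs "HOL-Complex_Analysis.Complex_Analysis"
begin

lemma sin_Arg_eq: "z \<noteq> 0 \<Longrightarrow> sin (Arg z) = Im z / norm z"
  by (metis Im_exp exp_Ln norm_exp_eq_Re Arg_def nonzero_eq_divide_eq norm_eq_zero mult.commute)

lemma deriv_near_id:
  assumes holg: "g holomorphic_on D" and oD: "open D" and rho: "\<rho> > 0"
    and sub: "cball \<zeta> \<rho> \<subseteq> D"
    and near: "\<And>z. z \<in> cball \<zeta> \<rho> \<Longrightarrow> norm (g z - z) \<le> e"
  shows "norm (deriv g \<zeta> - 1) \<le> e / \<rho>"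
proof -
  have hol2: "(\<lambda>x. g x - x) holomorphic_on ball \<zeta> \<rho>"
    using holg sub by (intro holomorphic_intros) (meson ball_subset_cball holomorphic_on_subset subset_trans)
  have cont2: "continuous_on (cball \<zeta> \<rho>) (\<lambda>x. g x - x)"
    using holg sub by (intro continuous_intros holomorphic_on_imp_continuous_on) (auto intro: holomorphic_on_subset)
  have "norm ((deriv ^^ 1) (\<lambda>x. g x - x) \<zeta>) \<le> fact 1 * e / \<rho> ^ 1"
    by (rule Cauchy_inequality[OF hol2 cont2 rho]) (use near in \<open>auto simp: dist_norm norm_minus_commute\<close>)
  moreover have "\<zeta> \<in> D" using sub rho by auto
  then have "g field_differentiable at \<zeta>"
    using holg oD holomorphic_on_imp_differentiable_at by blast
  then have "deriv (\<lambda>x. g x - x) \<zeta> = deriv g \<zeta> - 1"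
    by (subst deriv_diff) auto
  ultimately show ?thesis by simp
qed

lemma sqrt2_bound: "3 - 2 * sqrt 2 > (1/8::real)"
proof -
  have "sqrt 2 < 23/16" by (rule real_less_lsqrt) (auto simp: power2_eq_square)
  then show ?thesis by simp
qed

lemma bloch_step:
  assumes holg: "g holomorphic_on D" and oD: "open D" and d: "\<delta> > 0"
    and e1: "e \<le> \<delta>/20"
    and sub: "cball w \<delta> \<subseteq> D"
    and near: "\<And>z. z \<in> cball w \<delta> \<Longrightarrow> norm (g z - z) \<le> e"
  shows "\<exists>z\<in>ball w (\<delta>/2). g z = w"
proof -
  define \<rho> where "\<rho> = \<delta>/2"
  have rho: "\<rho> > 0" using d by (simp add: \<rho>_def)
  have dv: "norm (deriv g \<zeta> - 1) \<le> 1/5" if "\<zeta> \<in> cball w \<rho>" for \<zeta>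
  proof -
    have "cball \<zeta> \<rho> \<subseteq> cball w \<delta>"
      proof
      fix x assume "x \<in> cball \<zeta> \<rho>"
      then have "dist w x \<le> dist w \<zeta> + dist \<zeta> x" "dist \<zeta> x \<le> \<rho>" "dist w \<zeta> \<le> \<rho>"
        using that dist_triangle by auto
      then show "x \<in> cball w \<delta>" by (simp add: \<rho>_def)
    qed
    then have "norm (deriv g \<zeta> - 1) \<le> e / \<rho>"
      using deriv_near_id[OF holg oD rho _ near] sub by blast
    also have "\<dots> \<le> 1/5" using e1 rho by (simp add: \<rho>_def divide_simps)
    finally show ?thesis .
  qed
  have gw: "norm (deriv g w) \<ge> 4/5"
    proof -
    have "norm (deriv g w - 1) \<le> 1/5" using dv[of w] rho by simp
    moreover have "norm (1::complex) - norm (deriv g w) \<le> norm (deriv g w - 1)"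
      by (metis norm_minus_commute norm_triangle_ineq2)
    ultimately show ?thesis by simp
  qed
  have le: "norm (deriv g \<zeta>) \<le> 2 * norm (deriv g w)" if "\<zeta> \<in> ball w \<rho>" for \<zeta>
  proof -
    have "norm (deriv g \<zeta>) \<le> 6/5"
      proof -
      have "norm (deriv g \<zeta> - 1) \<le> 1/5" using dv[of \<zeta>] that by simp
      moreover have "norm (deriv g \<zeta>) - norm (1::complex) \<le> norm (deriv g \<zeta> - 1)"
        by (rule norm_triangle_ineq2)
      ultimately show ?thesis by simp
    qed
    then show ?thesis using gw by linarith
  qed
  have holc: "g holomorphic_on cball w \<rho>"
    proof -
    have "cball w \<rho> \<subseteq> cball w \<delta>" using d by (intro subset_cball) (simp add: \<rho>_def)
    then show ?thesis using holg sub by (meson holomorphic_on_subset subset_trans)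
  qed
  have B: "ball (g w) ((3 - 2 * sqrt 2) * \<rho> * norm (deriv g w)) \<subseteq> g ` ball w \<rho>"
    by (rule Bloch_lemma[OF holc rho le])
  have "(3 - 2 * sqrt 2) * \<rho> * norm (deriv g w) > (1/8) * \<rho> * (4/5)"
    proof -
    have "(1/8) * \<rho> * (4/5) < (3 - 2 * sqrt 2) * \<rho> * (4/5)"
      using sqrt2_bound rho by simp
    also have "\<dots> \<le> (3 - 2 * sqrt 2) * \<rho> * norm (deriv g w)"
      using sqrt2_bound rho gw by (intro mult_left_mono) auto
    finally show ?thesis .
  qed
  moreover have "norm (g w - w) \<le> \<rho>/10"
    using near[of w] d e1 by (simp add: \<rho>_def)
  ultimately have "dist (g w) w < (3 - 2 * sqrt 2) * \<rho> * norm (deriv g w)"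
    by (simp add: dist_norm)
  then have "w \<in> ball (g w) ((3 - 2 * sqrt 2) * \<rho> * norm (deriv g w))"
    by simp
  with B show ?thesis by (auto simp: \<rho>_def)
qed

lemma im_g_le:
  fixes g :: "complex \<Rightarrow> complex"
  assumes oD: "open D" and holg: "g holomorphic_on D" and inj: "inj_on g D"
    and img: "g ` D = {w. Im w > 0}" and DH: "D \<subseteq> {w. Im w > 0}"
    and big: "\<And>z. Im z > 0 \<Longrightarrow> norm z > r \<Longrightarrow> z \<in> D"
    and asym: "\<And>\<epsilon>. \<epsilon> > 0 \<Longrightarrow> \<exists>R. \<forall>z\<in>D. norm z \<ge> R \<longrightarrow> norm (g z - z) \<le> \<epsilon>"
    and zD: "z \<in> D"
  shows "Im (g z) \<le> Im z"
proof -
  obtain f where holf: "f holomorphic_on (g ` D)" and fg: "\<And>z. z \<in> D \<Longrightarrow> f (g z) = z"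
    using holomorphic_has_inverse[OF holg oD inj] by metis
  have fD: "f w \<in> D" if "Im w > 0" for w
  proof -
    from that img obtain z' where "z' \<in> D" "w = g z'" by auto
    then show ?thesis using fg by auto
  qed
  have holfH: "f holomorphic_on {w. Im w > 0}" using holf img by simp
  have KC: "\<exists>R. \<forall>w. Im w \<ge> \<delta> \<and> norm w \<ge> R \<longrightarrow> norm (f w - w) \<le> \<epsilon>"
    if dl: "\<delta> > 0" and ep: "\<epsilon> > 0" for \<delta> \<epsilon>
  proof -
    define e where "e = min \<epsilon> (\<delta>/40)"
    have e0: "e > 0" using dl ep by (simp add: e_def)
    obtain R1 where R1: "\<forall>z\<in>D. norm z \<ge> R1 \<longrightarrow> norm (g z - z) \<le> e"
      using asym[OF e0] by blast
    define R where "R = max R1 r + 2*\<delta> + 1"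
    show ?thesis
    proof (intro exI allI impI)
      fix w assume w: "Im w \<ge> \<delta> \<and> norm w \<ge> R"
      have inc: "x \<in> D \<and> norm x \<ge> R1" if "x \<in> cball w (\<delta>/2)" for x
      proof -
        have d: "norm (w - x) \<le> \<delta>/2" using that by (simp add: dist_norm)
        have "norm w - norm (w - x) \<le> norm x" by (metis norm_triangle_ineq2 norm_minus_commute diff_diff_eq2 add_diff_cancel_left' norm_diff_triangle_ineq)
        then have nx: "norm x \<ge> norm w - \<delta>/2" using d by linarith
        have "Im w - Im x \<le> norm (w - x)" using abs_Im_le_cmod[of "w - x"] by simp
        then have "Im x \<ge> \<delta>/2" using d w by linarith
        moreover have "norm x > max R1 r" using nx w dl max.cobounded1[of R1 r] max.cobounded2[of r R1] unfolding R_def by (simp only: max_less_iff_conj) linarith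
        ultimately show ?thesis using big dl by auto
      qed
      have sub: "cball w (\<delta>/2) \<subseteq> D" using inc by blast
      have near: "norm (g x - x) \<le> e" if "x \<in> cball w (\<delta>/2)" for x
        using inc[OF that] R1 by blast
      have "e \<le> \<delta>/2/20" by (simp add: e_def)
      then obtain z where z: "z \<in> ball w (\<delta>/2/2)" "g z = w"
        using bloch_step[OF holg oD _ _ sub near] dl by (meson half_gt_zero)
      have zc: "z \<in> cball w (\<delta>/2)" using z(1) dl by auto
      have "f w = z" using fg inc[OF zc] z(2) by blast
      then have "norm (f w - w) = norm (g z - z)" using z(2) by (simp add: norm_minus_commute)
      also have "\<dots> \<le> e" using near[OF zc] .
      also have "\<dots> \<le> \<epsilon>" by (simp add: e_def)
      finally show "norm (f w - w) \<le> \<epsilon>" .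
    qed
  qed
  define w0 where "w0 = g z"
  have w0: "Im w0 > 0" using zD img w0_def by auto
  have fw0: "f w0 = z" using fg zD w0_def by simp
  have "Im w0 \<le> Im (f w0) + \<eta>" if eta: "\<eta> > 0" for \<eta>
  proof -
    define \<delta> where "\<delta> = min \<eta> (Im w0 / 2)"
    have dl: "\<delta> > 0" using eta w0 by (simp add: \<delta>_def)
    obtain R where R: "\<forall>w. Im w \<ge> \<delta> \<and> norm w \<ge> R \<longrightarrow> norm (f w - w) \<le> \<eta>"
      using KC[OF dl eta] by blast
    define R' where "R' = max R (norm w0 + 1)"
    define S where "S = {w. Im w > \<delta>} \<inter> ball 0 R'"
    define F where "F = (\<lambda>w. exp (\<i> * (f w - w)))"
    have normF: "norm (F w) = exp (Im w - Im (f w))" for w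
      by (simp add: F_def)
    have oS: "open S" unfolding S_def by (intro open_Int open_halfspace_Im_gt open_ball)
    have SH: "S \<subseteq> {w. Im w > 0}" using dl by (auto simp: S_def)
    have clS: "closure S \<subseteq> {w. Im w \<ge> \<delta>} \<inter> cball 0 R'"
      by (rule closure_minimal) (auto simp: S_def intro: closed_Int closed_halfspace_Im_ge)
    have clSH: "closure S \<subseteq> {w. Im w > 0}" using clS dl by auto
    have holFH: "F holomorphic_on {w. Im w > 0}"
      unfolding F_def by (intro holomorphic_intros holfH)
    have holF: "F holomorphic_on interior S"
      using holFH SH oS by (simp add: interior_open holomorphic_on_subset)
    have contF: "continuous_on (closure S) F"
      using holFH clSH holomorphic_on_imp_continuous_on continuous_on_subset by blast
    have bS: "bounded S" unfolding S_def by (intro bounded_Int) auto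
    have fr: "norm (F w) \<le> exp \<eta>" if "w \<in> frontier S" for w
    proof -
      have wc: "w \<in> closure S" and wn: "w \<notin> S"
        using that oS by (auto simp: frontier_def interior_open)
      have wi: "Im w \<ge> \<delta>" "norm w \<le> R'" using clS wc by auto
      have "Im w - Im (f w) \<le> \<eta>"
      proof (cases "Im w \<le> \<delta>")
        case True
        have "Im (f w) > 0" using fD[of w] DH wi dl by auto
        then show ?thesis using True by (simp add: \<delta>_def)
      next
        case False
        then have "norm w \<ge> R'" using wn by (auto simp: S_def)
        then have "norm w \<ge> R" by (simp add: R'_def)
        then have "norm (f w - w) \<le> \<eta>" using R wi by blast
        moreover have "Im w - Im (f w) \<le> norm (f w - w)"
          using abs_Im_le_cmod[of "f w - w"] by simp
        ultimately show ?thesis by linarith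
      qed
      then show ?thesis by (simp add: normF)
    qed
    have w0S: "w0 \<in> S" using w0 by (auto simp: S_def \<delta>_def R'_def)
    have "norm (F w0) \<le> exp \<eta>"
      by (rule maximum_modulus_frontier[OF holF contF bS fr w0S])
    then show ?thesis by (simp add: normF)
  qed
  then have "Im w0 \<le> Im (f w0)" by (rule field_le_epsilon)
  then show ?thesis using fw0 w0_def by simp
qed

lemma norm_lt_cnj:
  fixes X a :: complex
  assumes "Im X > 0" "Im a > 0"
  shows "norm (X - a) < norm (X - cnj a)"
proof -
  have e1: "norm (X - a)^2 = (Re X - Re a)^2 + (Im X - Im a)^2" by (simp add: cmod_power2)
  have e2: "norm (X - cnj a)^2 = (Re X - Re a)^2 + (Im X + Im a)^2" by (simp add: cmod_power2)
  have "(Im X - Im a)^2 < (Im X + Im a)^2" using assms by (simp add: power2_eq_square algebra_simps)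
  then have "norm (X - a) ^ 2 < norm (X - cnj a) ^ 2" unfolding e1 e2 by simp
  then show ?thesis by (rule power_less_imp_less_base) simp
qed

lemma schwarz_pick_H:
  assumes holp: "p holomorphic_on ball z \<rho>" and rho: "\<rho> > 0"
    and pos: "\<And>\<xi>. \<xi> \<in> ball z \<rho> \<Longrightarrow> Im (p \<xi>) > 0"
  shows "norm (deriv p z) \<le> 2 * Im (p z) / \<rho>"
proof -
  define a where "a = p z"
  have a0: "Im a > 0" using pos[of z] rho by (simp add: a_def)
  define L where "L = (\<lambda>\<xi>::complex. z + of_real \<rho> * \<xi>)"
  have Lb: "L \<xi> \<in> ball z \<rho>" if "\<xi> \<in> ball 0 1" for \<xi>
    using that rho by (simp add: L_def dist_norm norm_mult)
  define P where "P = (\<lambda>\<xi>. p (L \<xi>))"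
  define \<psi> where "\<psi> = (\<lambda>\<xi>. (P \<xi> - a) / (P \<xi> - cnj a))"
  have den: "P \<xi> - cnj a \<noteq> 0" if "\<xi> \<in> ball 0 1" for \<xi>
  proof -
    have "Im (P \<xi> - cnj a) > 0" using pos[OF Lb[OF that]] a0 by (simp add: P_def)
    then show ?thesis by auto
  qed
  have holL: "L holomorphic_on ball 0 1" unfolding L_def by (intro holomorphic_intros)
  have holP: "P holomorphic_on ball 0 1"
  proof -
    have "L ` ball 0 1 \<subseteq> ball z \<rho>" using Lb by blast
    then show ?thesis using holomorphic_on_compose_gen[OF holL holp] by (simp add: P_def o_def)
  qed
  have holpsi: "\<psi> holomorphic_on ball 0 1"
    unfolding \<psi>_def using den by (intro holomorphic_intros holP) auto
  have psi0: "\<psi> 0 = 0" by (simp add: \<psi>_def P_def L_def a_def)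
  have psilt: "norm (\<psi> \<xi>) < 1" if "norm \<xi> < 1" for \<xi>
  proof -
    have \<xi>: "\<xi> \<in> ball 0 1" using that by simp
    have "norm (P \<xi> - a) < norm (P \<xi> - cnj a)"
      using norm_lt_cnj pos[OF Lb[OF \<xi>]] a0 by (simp add: P_def)
    then show ?thesis using den[OF \<xi>] by (simp add: \<psi>_def norm_divide divide_less_eq)
  qed
  have sch: "norm (deriv \<psi> 0) \<le> 1"
    using Schwarz_Lemma(2)[OF holpsi psi0 psilt, of 0] by simp
  have dp: "(p has_field_derivative deriv p z) (at z)"
    using holp rho by (intro holomorphic_derivI[of _ "ball z \<rho>"]) auto
  have dL: "(L has_field_derivative of_real \<rho>) (at 0)"
    unfolding L_def by (auto intro!: derivative_eq_intros)
  have L0: "L 0 = z" by (simp add: L_def)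
  have dP: "(P has_field_derivative deriv p z * of_real \<rho>) (at 0)"
    unfolding P_def using DERIV_chain2[of p "deriv p z" L 0 "of_real \<rho>"] dp dL L0 by simp
  have P0: "P 0 = a" by (simp add: P_def L0 a_def)
  have dpsi: "(\<psi> has_field_derivative
        ((deriv p z * of_real \<rho>) * (P 0 - cnj a) - (P 0 - a) * (deriv p z * of_real \<rho>)) / ((P 0 - cnj a) * (P 0 - cnj a))) (at 0)"
    unfolding \<psi>_def by (rule DERIV_divide) (use dP den[of 0] in \<open>auto intro!: derivative_eq_intros\<close>)
  have ne: "a - cnj a \<noteq> 0" using a0 by (auto simp: complex_eq_iff)
  have "deriv \<psi> 0 = (deriv p z * of_real \<rho> * (a - cnj a)) / ((a - cnj a) * (a - cnj a))"
    using DERIV_imp_deriv[OF dpsi] by (simp add: P0)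
  also have "\<dots> = deriv p z * of_real \<rho> / (a - cnj a)"
    using ne by simp
  finally have dv: "deriv \<psi> 0 = deriv p z * of_real \<rho> / (a - cnj a)" .
  have nac: "norm (a - cnj a) = 2 * Im a"
  proof -
    have "a - cnj a = of_real (2 * Im a) * \<i>" by (simp add: complex_eq_iff)
    then show ?thesis using a0 by (simp add: norm_mult)
  qed
  have "norm (deriv \<psi> 0) = norm (deriv p z) * \<rho> / (2 * Im a)"
    unfolding dv norm_divide norm_mult nac using rho by simp
  with sch have "norm (deriv p z) * \<rho> / (2 * Im a) \<le> 1" by simp
  then have "norm (deriv p z) * \<rho> \<le> 2 * Im a" using a0 by (simp add: divide_le_eq)
  then show ?thesis using rho by (simp add: a_def pos_le_divide_eq)
qed

lemma norm_add_imag_ge: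
  fixes z :: complex
  assumes "Im z = 0"
  shows "norm z \<le> norm (z + of_real t * \<i>)"
proof -
  have "norm z = sqrt ((Re z)^2)" using assms by (simp add: cmod_def)
  also have "\<dots> \<le> sqrt ((Re z)^2 + t^2)" by (intro real_sqrt_le_mono) simp
  also have "\<dots> = norm (z + of_real t * \<i>)" using assms by (simp add: cmod_def)
  finally show ?thesis .
qed

lemma g_deriv_bound:
  fixes g :: "complex \<Rightarrow> complex"
  assumes holg: "g holomorphic_on D" and oD: "open D"
    and img: "\<And>z. z \<in> D \<Longrightarrow> Im (g z) > 0"
    and big: "\<And>z. Im z > 0 \<Longrightarrow> norm z > r \<Longrightarrow> z \<in> D"
    and gle: "\<And>z. z \<in> D \<Longrightarrow> Im (g z) \<le> Im z"
    and r0: "r \<ge> 0" and Rr: "R > r"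
    and z: "Im z > 0" "norm z \<ge> R"
  shows "norm (deriv g z) \<le> 2 * R / (R - r)"
proof -
  define d where "d = min (Im z) (norm z - r)"
  have d0: "d > 0" using z Rr by (simp add: d_def)
  have bz: "ball z d \<subseteq> D"
  proof
    fix x assume "x \<in> ball z d"
    then have dx: "norm (z - x) < d" by (simp add: dist_norm)
    have "Im z - Im x \<le> norm (z - x)" using abs_Im_le_cmod[of "z - x"] by simp
    then have "Im x > 0" using dx by (simp add: d_def)
    moreover have "norm z - norm (z - x) \<le> norm x"
      by (metis add_diff_cancel_left' diff_diff_eq2 norm_triangle_ineq2)
    then have "norm x > r" using dx by (simp add: d_def)
    ultimately show "x \<in> D" using big by blast
  qed
  have "norm (deriv g z) \<le> 2 * Im (g z) / d"
    using schwarz_pick_H[of g z d] holg bz d0 img by (meson holomorphic_on_subset subsetD)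
  also have "\<dots> \<le> 2 * Im z / d"
  proof -
    have "z \<in> D" using bz d0 centre_in_ball by blast
    then show ?thesis using gle[of z] d0 by (intro divide_right_mono) auto
  qed
  also have "\<dots> \<le> 2 * R / (R - r)"
  proof -
    have q: "R / (R - r) \<ge> 1" using Rr r0 by simp
    have "1 * Im z \<le> R / (R - r) * Im z" by (rule mult_right_mono[OF q]) (use z in auto)
    then have "Im z \<le> R / (R - r) * Im z" by simp
    moreover have "Im z \<le> R / (R - r) * (norm z - r)"
    proof -
      have "Im z \<le> norm z" using abs_Im_le_cmod[of z] by simp
      also have "norm z \<le> R / (R - r) * (norm z - r)"
        using Rr r0 z by (simp add: field_simps) (metis mult.commute mult_left_mono diff_ge_0_iff_ge)
      finally show ?thesis .
    qed
    ultimately have "Im z \<le> R / (R - r) * d" by (simp add: d_def min_def)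
    then show ?thesis using d0 by (simp add: divide_simps)
  qed
  finally show ?thesis .
qed

lemma reflect_ext:
  fixes g :: "complex \<Rightarrow> complex"
  assumes holg: "g holomorphic_on D" and oD: "open D"
    and img: "\<And>z. z \<in> D \<Longrightarrow> Im (g z) > 0"
    and big: "\<And>z. Im z > 0 \<Longrightarrow> norm z > r \<Longrightarrow> z \<in> D"
    and gle: "\<And>z. z \<in> D \<Longrightarrow> Im (g z) \<le> Im z"
    and r0: "r \<ge> 0" and R1: "R1 > r"
  obtains G where "G holomorphic_on {z. norm z > R1}"
    "\<And>z. norm z > R1 \<Longrightarrow> Im z > 0 \<Longrightarrow> G z = g z"
    "\<And>z. norm z > R1 \<Longrightarrow> Im z < 0 \<Longrightarrow> G z = cnj (g (cnj z))"
proof -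
  define R' where "R' = (r + R1) / 2"
  have R'r: "R' > r" and R'R: "R' < R1" using R1 by (auto simp: R'_def)
  define M where "M = 2 * R' / (R' - r)"
  have M0: "M \<ge> 0" using R'r r0 by (simp add: M_def)
  define Y where "Y = {z. Im z > 0 \<and> norm z > R'}"
  define X where "X = {z. Im z > 0 \<and> norm z > R1}"
  have YD: "Y \<subseteq> D" using big R'r by (auto simp: Y_def)
  have dY: "norm (deriv g z) \<le> M" if "z \<in> Y" for z
    using g_deriv_bound[OF holg oD img big gle r0 R'r] that by (simp add: Y_def M_def)
  have lip: "norm (g x - g y) \<le> M * norm (x - y)" if x: "x \<in> X" and y: "y \<in> X" and xy: "norm (x - y) < R1 - R'" for x y
  proof -
    have segY: "closed_segment x y \<subseteq> Y"
    proof
      fix \<xi> assume \<xi>: "\<xi> \<in> closed_segment x y"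
      have "closed_segment x y \<subseteq> {z. Im z > 0}"
        using x y convex_contains_segment[THEN iffD1, OF convex_halfspace_Im_gt[of 0]] by (auto simp: X_def)
      then have "Im \<xi> > 0" using \<xi> by auto
      moreover have "dist \<xi> x \<le> dist x y" using dist_in_closed_segment[OF \<xi>] by simp
      then have "norm (x - \<xi>) < R1 - R'" using xy by (simp add: dist_norm norm_minus_commute)
      moreover have "norm x - norm (x - \<xi>) \<le> norm \<xi>"
        by (metis add_diff_cancel_left' diff_diff_eq2 norm_triangle_ineq2)
      ultimately show "\<xi> \<in> Y" using x by (auto simp: X_def Y_def)
    qed
    have "norm (g x - g y) \<le> M * norm (x - y)"
    proof (rule field_differentiable_bound[of "closed_segment x y" g "deriv g"])
      show "convex (closed_segment x y)" by simp
      show "(g has_field_derivative deriv g z) (at z within closed_segment x y)" if "z \<in> closed_segment x y" for z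
      proof -
        have "z \<in> D" using that segY YD by blast
        then show ?thesis using holg oD by (intro holomorphic_derivI) auto
      qed
      show "norm (deriv g z) \<le> M" if "z \<in> closed_segment x y" for z using that segY dY by blast
    qed auto
    then show ?thesis .
  qed
  have uc: "uniformly_continuous_on X g"
    unfolding uniformly_continuous_on_def
  proof (intro allI impI)
    fix e :: real assume e: "e > 0"
    define d where "d = min (R1 - R') (e / (M + 1))"
    have d0: "d > 0" using e R'R M0 by (simp add: d_def)
    show "\<exists>d>0. \<forall>x\<in>X. \<forall>x'\<in>X. dist x' x < d \<longrightarrow> dist (g x') (g x) < e"
    proof (intro exI conjI ballI impI)
      show "d > 0" by (rule d0)
      fix x x' assume xX: "x \<in> X" and x'X: "x' \<in> X" and dd: "dist x' x < d"
      have "norm (x' - x) < R1 - R'" using dd by (simp add: dist_norm d_def)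
      then have "norm (g x' - g x) \<le> M * norm (x' - x)" using lip x'X xX by blast
      also have "\<dots> \<le> M * (e / (M + 1))"
        using dd M0 by (intro mult_left_mono) (auto simp: dist_norm d_def)
      also have "\<dots> < e" using e M0 by (simp add: field_simps)
      finally show "dist (g x') (g x) < e" by (simp add: dist_norm)
    qed
  qed
  obtain ext where ucx: "uniformly_continuous_on (closure X) ext" and extg: "\<And>x. x \<in> X \<Longrightarrow> g x = ext x"
    using uniformly_continuous_on_extension_on_closure[OF uc] by metis
  have contx: "continuous_on (closure X) ext" using ucx uniformly_continuous_imp_continuous by blast
  define S where "S = {z::complex. norm z > R1}"
  have oS: "open S"
  proof -
    have "S = - cball 0 R1" by (auto simp: S_def)
    then show ?thesis by auto
  qed
  have cS: "cnj ` S \<subseteq> S" by (auto simp: S_def)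
  have SX: "S \<inter> {z. 0 < Im z} = X" by (auto simp: S_def X_def)
  have SclX: "S \<inter> {z. 0 \<le> Im z} \<subseteq> closure X"
  proof
    fix z assume z: "z \<in> S \<inter> {z. 0 \<le> Im z}"
    show "z \<in> closure X"
    proof (cases "Im z > 0")
      case True then show ?thesis using z by (auto simp: S_def X_def intro: closure_subset[THEN subsetD])
    next
      case False
      then have z0: "Im z = 0" using z by auto
      show ?thesis unfolding closure_approachable
      proof (intro allI impI)
        fix e :: real assume e: "e > 0"
        define y where "y = z + of_real (e/2) * \<i>"
        have "norm z \<le> norm y" unfolding y_def by (rule norm_add_imag_ge[OF z0])
        then have "y \<in> X" using z z0 e by (auto simp: X_def S_def y_def)
        moreover have "dist y z < e" using e by (simp add: y_def dist_norm norm_mult)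
        ultimately show "\<exists>y\<in>X. dist y z < e" by blast
      qed
    qed
  qed
  have holext: "ext holomorphic_on (S \<inter> {z. 0 < Im z})"
  proof -
    have "X \<subseteq> D" using YD R'R by (auto simp: X_def Y_def)
    then have "g holomorphic_on X" using holg holomorphic_on_subset by blast
    then have "ext holomorphic_on X" using holomorphic_transform extg by metis
    then show ?thesis unfolding SX .
  qed
  have contE: "continuous_on (S \<inter> {z. 0 \<le> Im z}) ext"
    using contx SclX continuous_on_subset by blast
  have realext: "ext z \<in> \<real>" if zS: "z \<in> S" and zR: "z \<in> \<real>" for z
  proof (rule ccontr)
    assume nr: "ext z \<notin> \<real>"
    define e where "e = \<bar>Im (ext z)\<bar> / 2"
    have e0: "e > 0" using nr by (simp add: e_def complex_is_Real_iff)
    have z0: "Im z = 0" using zR by (simp add: complex_is_Real_iff)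
    have zc: "z \<in> closure X" using SclX zS z0 by auto
    obtain d where d0: "d > 0" and dd: "\<forall>x'\<in>closure X. dist x' z < d \<longrightarrow> dist (ext x') (ext z) < e"
      using contx zc e0 unfolding continuous_on_iff by blast
    define t where "t = min (d/2) e"
    have t0: "t > 0" using d0 e0 by (simp add: t_def)
    define y where "y = z + of_real t * \<i>"
    have "norm z \<le> norm y" unfolding y_def by (rule norm_add_imag_ge[OF z0])
    then have yX: "y \<in> X" using zS z0 t0 by (auto simp: X_def S_def y_def)
    have "dist y z < d" using t0 d0 by (simp add: y_def dist_norm norm_mult t_def)
    then have "dist (ext y) (ext z) < e" using dd yX closure_subset by blast
    then have "\<bar>Im (ext y) - Im (ext z)\<bar> < e"
      using abs_Im_le_cmod[of "ext y - ext z"] by (simp add: dist_norm)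
    moreover have "y \<in> D" using yX YD R'R by (auto simp: X_def Y_def)
    then have "Im (ext y) > 0" "Im (ext y) \<le> t"
      using img[of y] gle[of y] extg[OF yX] z0 by (auto simp: y_def)
    ultimately show False using t0 by (auto simp: e_def t_def abs_if split: if_split_asm)
  qed
  define G where "G = (\<lambda>z. if 0 \<le> Im z then ext z else cnj (ext (cnj z)))"
  have holG: "G holomorphic_on S"
    unfolding G_def by (rule Schwarz_reflection[OF oS cS holext contE realext])
  show ?thesis
  proof (rule that)
    show "G holomorphic_on {z. norm z > R1}" using holG by (simp add: S_def)
    show "G z = g z" if "norm z > R1" "Im z > 0" for z
      using that extg[of z] by (simp add: G_def X_def)
    show "G z = cnj (g (cnj z))" if "norm z > R1" "Im z < 0" for z
      using that extg[of "cnj z"] by (simp add: G_def X_def)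
  qed
qed

lemma norm_lt_shift:
  fixes X :: complex
  assumes "Re X \<ge> 0" "a \<ge> 0" "e > 0"
  shows "norm (X - of_real a) < norm (X + of_real (a + 2*e))"
proof -
  have e1: "norm (X - of_real a)^2 = (Re X - a)^2 + (Im X)^2" by (simp add: cmod_power2)
  have e2: "norm (X + of_real (a + 2*e))^2 = (Re X + a + 2*e)^2 + (Im X)^2" by (simp add: cmod_power2 add.assoc)
  have "(Re X - a)^2 < (Re X + a + 2*e)^2"
  proof -
    have "(Re X + a + 2*e)^2 - (Re X - a)^2 = (2 * Re X + 2*e) * (2*a + 2*e)"
      by (simp add: power2_eq_square algebra_simps)
    also have "\<dots> > 0" using assms by (intro mult_pos_pos) auto
    finally show ?thesis by simp
  qed
  then have "norm (X - of_real a)^2 < norm (X + of_real (a + 2*e))^2" unfolding e1 e2 by simp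
  then show ?thesis by (rule power_less_imp_less_base) simp
qed

lemma schwarz_re_bound:
  fixes F :: "complex \<Rightarrow> complex"
  assumes holF: "F holomorphic_on ball 0 \<rho>" and rho: "\<rho> > 0"
    and pos: "\<And>\<zeta>. \<zeta> \<in> ball 0 \<rho> \<Longrightarrow> Re (F \<zeta>) \<ge> 0"
    and F0: "F 0 = of_real a" and a0: "a \<ge> 0"
    and \<zeta>: "norm \<zeta> < \<rho>"
  shows "(1 - norm \<zeta> / \<rho>) * norm (F \<zeta> - of_real a) \<le> 2 * a * (norm \<zeta> / \<rho>)"
proof -
  define q where "q = norm \<zeta> / \<rho>"
  have q0: "q \<ge> 0" "q < 1" using \<zeta> rho by (auto simp: q_def)
  have key: "norm (F \<zeta> - of_real a) \<le> q * (norm (F \<zeta> - of_real a) + 2 * a) + q * (2 * e)" if e: "e > 0" for e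
  proof -
    define L where "L = (\<lambda>\<xi>::complex. of_real \<rho> * \<xi>)"
    have Lb: "L \<xi> \<in> ball 0 \<rho>" if "\<xi> \<in> ball 0 1" for \<xi>
      using that rho by (simp add: L_def norm_mult)
    define \<omega> where "\<omega> = (\<lambda>\<xi>. (F (L \<xi>) - of_real a) / (F (L \<xi>) + of_real (a + 2*e)))"
    have den: "F (L \<xi>) + of_real (a + 2*e) \<noteq> 0" if "\<xi> \<in> ball 0 1" for \<xi>
    proof -
      have "Re (F (L \<xi>) + of_real (a + 2*e)) > 0" using pos[OF Lb[OF that]] a0 e by simp
      then show ?thesis by (metis less_irrefl zero_complex.simps(1))
    qed
    have holL: "L holomorphic_on ball 0 1" unfolding L_def by (intro holomorphic_intros)
    have holFL: "(\<lambda>\<xi>. F (L \<xi>)) holomorphic_on ball 0 1"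
    proof -
      have "L ` ball 0 1 \<subseteq> ball 0 \<rho>" using Lb by blast
      then show ?thesis using holomorphic_on_compose_gen[OF holL holF] by (simp add: o_def)
    qed
    have holw: "\<omega> holomorphic_on ball 0 1"
      unfolding \<omega>_def using den by (intro holomorphic_intros holFL) auto
    have w0: "\<omega> 0 = 0" by (simp add: \<omega>_def L_def F0)
    have wlt: "norm (\<omega> \<xi>) < 1" if "norm \<xi> < 1" for \<xi>
    proof -
      have \<xi>: "\<xi> \<in> ball 0 1" using that by simp
      have "norm (F (L \<xi>) - of_real a) < norm (F (L \<xi>) + of_real (a + 2*e))"
        using norm_lt_shift pos[OF Lb[OF \<xi>]] a0 e by blast
      then show ?thesis using den[OF \<xi>] by (simp add: \<omega>_def norm_divide divide_less_eq)
    qed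
    define \<xi> where "\<xi> = \<zeta> / of_real \<rho>"
    have n\<xi>: "norm \<xi> = q" using rho by (simp add: \<xi>_def q_def norm_divide)
    have L\<xi>: "L \<xi> = \<zeta>" using rho by (simp add: L_def \<xi>_def)
    have "norm (\<omega> \<xi>) \<le> norm \<xi>"
      using Schwarz_Lemma(1)[OF holw w0 wlt, of \<xi>] n\<xi> q0 by simp
    then have "norm (F \<zeta> - of_real a) / norm (F \<zeta> + of_real (a + 2*e)) \<le> q"
      using n\<xi> L\<xi> by (simp add: \<omega>_def norm_divide)
    moreover have "F \<zeta> + of_real (a + 2*e) \<noteq> 0"
      using den[of \<xi>] L\<xi> n\<xi> q0 by simp
    ultimately have "norm (F \<zeta> - of_real a) \<le> q * norm (F \<zeta> + of_real (a + 2*e))"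
      by (simp add: divide_le_eq mult.commute)
    also have "\<dots> \<le> q * (norm (F \<zeta> - of_real a) + 2 * a + 2 * e)"
    proof (intro mult_left_mono q0)
      have "F \<zeta> + of_real (a + 2*e) = (F \<zeta> - of_real a) + of_real (2*a + 2*e)" by simp
      then have tri: "norm (F \<zeta> + of_real (a + 2*e)) \<le> norm (F \<zeta> - of_real a) + norm (of_real (2*a + 2*e) :: complex)"
        by (metis norm_triangle_ineq)
      have nn: "norm (of_real (2*a + 2*e) :: complex) = 2*a + 2*e"
        by (subst norm_of_real) (use a0 e in simp)
      show "norm (F \<zeta> + of_real (a + 2*e)) \<le> norm (F \<zeta> - of_real a) + 2 * a + 2 * e"
        using tri unfolding nn by linarith
    qed
    finally show ?thesis by (simp add: algebra_simps)
  qed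
  have "norm (F \<zeta> - of_real a) \<le> q * (norm (F \<zeta> - of_real a) + 2 * a)"
  proof (rule field_le_epsilon)
    fix e :: real assume e: "e > 0"
    show "norm (F \<zeta> - of_real a) \<le> q * (norm (F \<zeta> - of_real a) + 2 * a) + e"
    proof (cases "q = 0")
      case True then show ?thesis using key[of 1] e by simp
    next
      case False
      then have "q > 0" using q0 by simp
      then have "q * (2 * (e / (2*q))) = e" by simp
      then show ?thesis using key[of "e/(2*q)"] e \<open>q > 0\<close> by simp
    qed
  qed
  then show ?thesis by (simp add: q_def algebra_simps)
qed

lemma asy_all:
  fixes G :: "complex \<Rightarrow> complex"
  assumes holG: "G holomorphic_on {z. norm z > R1}" and R1: "R1 > 0" and C0: "C0 \<ge> 0"
    and asy: "\<And>z. norm z > R1 \<Longrightarrow> norm z \<ge> R0 \<Longrightarrow> Im z \<noteq> 0 \<Longrightarrow> norm (G z - z - of_real h / z) \<le> C0 / (norm z)^2"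
    and z: "norm z > R1" "norm z \<ge> R0"
  shows "norm (G z - z - of_real h / z) \<le> C0 / (norm z)^2"
proof (cases "Im z = 0")
  case False then show ?thesis using asy z by blast
next
  case True
  define \<phi> where "\<phi> = (\<lambda>t::real. G (z + of_real t * \<i>) - (z + of_real t * \<i>) - of_real h / (z + of_real t * \<i>))"
  have oS: "open {z::complex. norm z > R1}"
  proof -
    have "{z::complex. norm z > R1} = - cball 0 R1" by auto
    then show ?thesis by auto
  qed
  have cG: "isCont G z"
    using holomorphic_on_imp_continuous_on[OF holG] oS z continuous_on_eq_continuous_at by blast
  have z0: "z \<noteq> 0" using z R1 by auto
  have c1: "isCont (\<lambda>t::real. z + of_real t * \<i>) 0" by (intro continuous_intros)
  have c2: "isCont (\<lambda>t. G (z + of_real t * \<i>)) 0" using isCont_o2[OF c1, of G] cG by simp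
  have "isCont \<phi> 0"
    unfolding \<phi>_def using z0 by (intro continuous_intros c2) auto
  then have "(\<phi> \<longlongrightarrow> \<phi> 0) (at_right 0)" using isContD Lim_at_imp_Lim_at_within by blast
  moreover have "eventually (\<lambda>t. norm (\<phi> t) \<le> C0 / (norm z)^2) (at_right 0)"
    using eventually_at_right_less[of "0::real"]
  proof eventually_elim
    case (elim t)
    define y where "y = z + of_real t * \<i>"
    have ny: "norm z \<le> norm y" unfolding y_def by (rule norm_add_imag_ge[OF True])
    have "norm (\<phi> t) \<le> C0 / (norm y)^2"
      unfolding \<phi>_def y_def[symmetric] using asy[of y] ny z elim True by (simp add: y_def)
    also have "\<dots> \<le> C0 / (norm z)^2"
      using ny z R1 C0 by (intro divide_left_mono power_mono mult_pos_pos) auto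
    finally show ?case .
  qed
  ultimately have "norm (\<phi> 0) \<le> C0 / (norm z)^2"
    by (rule Lim_norm_ubound[rotated]) simp
  then show ?thesis by (simp add: \<phi>_def)
qed

lemma G_bound:
  fixes G :: "complex \<Rightarrow> complex" and h C0 R0 R1 R :: real
  assumes holG: "G holomorphic_on {z. norm z > R1}" and R1: "R1 > 0"
    and C0: "C0 \<ge> 0"
    and asy: "\<And>z. norm z > R1 \<Longrightarrow> norm z \<ge> R0 \<Longrightarrow> Im z \<noteq> 0 \<Longrightarrow> norm (G z - z - of_real h / z) \<le> C0 / (norm z)^2"
    and sign: "\<And>z. norm z > R1 \<Longrightarrow> Im z * Im (G z - z) \<le> 0"
    and R: "R > R1"
  shows "h \<ge> 0 \<and> (\<forall>z. norm z > R \<longrightarrow> (1 - R / norm z) * ((1/R)^2 - (1/norm z)^2) * norm (G z - z - of_real h / z)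
           \<le> (1 / norm z) * (2 * (h * (1/R)^2) * (R / norm z) + (1 - R / norm z) * h * (1/norm z)^2))"
proof -
  define \<rho>1 where "\<rho>1 = 1 / R1"
  define \<rho>2 where "\<rho>2 = 1 / R"
  have r1: "\<rho>1 > 0" and r2: "\<rho>2 > 0" and r12: "\<rho>2 < \<rho>1"
    using R1 R by (auto simp: \<rho>1_def \<rho>2_def frac_less2)
  define f where "f = (\<lambda>\<zeta>. (G (inverse \<zeta>) - inverse \<zeta>) / \<zeta>)"
  have inv_out: "norm (inverse \<zeta>) > R1" if "\<zeta> \<in> ball 0 \<rho>1 - {0}" for \<zeta> :: complex
  proof -
    have "norm \<zeta> < 1 / R1" "\<zeta> \<noteq> 0" using that by (auto simp: \<rho>1_def)
    then have "R1 < 1 / norm \<zeta>" using R1 by (simp add: less_divide_eq field_simps)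
    moreover have "norm (inverse \<zeta>) = 1 / norm \<zeta>" by (simp add: norm_inverse divide_inverse)
    ultimately show ?thesis by simp
  qed
  have holf: "f holomorphic_on ball 0 \<rho>1 - {0}"
  proof -
    have hi: "inverse holomorphic_on ball 0 \<rho>1 - {0}" by (intro holomorphic_intros) auto
    have "inverse ` (ball (0::complex) \<rho>1 - {0}) \<subseteq> {z. norm z > R1}" using inv_out by auto
    then have "(\<lambda>\<zeta>. G (inverse \<zeta>)) holomorphic_on ball 0 \<rho>1 - {0}"
      using holomorphic_on_compose_gen[OF hi holG] by (simp add: o_def)
    then show ?thesis unfolding f_def by (intro holomorphic_intros) auto
  qed
  have lim: "f \<midarrow>0\<rightarrow> of_real h"
  proof -
    have "(\<lambda>\<zeta>. f \<zeta> - of_real h) \<midarrow>0\<rightarrow> 0"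
    proof (rule Lim_null_comparison)
      show "((\<lambda>\<zeta>::complex. C0 * norm \<zeta>) \<longlongrightarrow> 0) (at 0)"
        by (auto intro!: tendsto_eq_intros)
      define d where "d = min \<rho>1 (1 / max R0 1)"
      have d0: "d > 0" using r1 by (simp add: d_def)
      show "eventually (\<lambda>\<zeta>. norm (f \<zeta> - of_real h) \<le> C0 * norm \<zeta>) (at 0)"
        unfolding eventually_at
      proof (intro exI conjI ballI impI)
        show "d > 0" by (rule d0)
        fix \<zeta> :: complex assume "\<zeta> \<in> UNIV" and \<zeta>: "\<zeta> \<noteq> 0 \<and> dist \<zeta> 0 < d"
        define z where "z = inverse \<zeta>"
        have z0: "z \<noteq> 0" using \<zeta> by (simp add: z_def)
        have nz: "norm z = 1 / norm \<zeta>" by (simp add: z_def norm_inverse divide_inverse)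
        have zR1: "norm z > R1" using inv_out[of \<zeta>] \<zeta> by (simp add: z_def d_def)
        have "norm \<zeta> < 1 / max R0 1" using \<zeta> by (simp add: d_def)
        then have "1 / norm \<zeta> > max R0 1" using \<zeta>
          by (metis divide_less_eq less_max_iff_disj mult.commute zero_less_norm_iff max.cobounded2 less_le_trans zero_less_one
              less_divide_eq)
        then have zR0: "norm z \<ge> R0" using nz by simp
        have "f \<zeta> - of_real h = (G z - z - of_real h / z) * z"
          using z0 \<zeta> by (simp add: f_def z_def field_simps)
        then have "norm (f \<zeta> - of_real h) = norm (G z - z - of_real h / z) * norm z"
          by (simp add: norm_mult)
        also have "\<dots> \<le> C0 / (norm z)^2 * norm z"
          using asy_all[OF holG R1 C0 asy zR1 zR0] by (intro mult_right_mono) auto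
        also have "\<dots> = C0 * norm \<zeta>"
          using z0 nz \<zeta> by (simp add: power2_eq_square field_simps)
        finally show "norm (f \<zeta> - of_real h) \<le> C0 * norm \<zeta>" .
      qed
    qed
    then show ?thesis by (simp add: LIM_zero_iff)
  qed
  define Q1 where "Q1 = (\<lambda>y. if y = 0 then of_real h else f y)"
  have holQ: "Q1 holomorphic_on ball 0 \<rho>1"
    unfolding Q1_def by (rule removable_singularity[OF holf open_ball lim])
  define Hf where "Hf = (\<lambda>\<zeta>. Q1 \<zeta> * (of_real (\<rho>2^2) - \<zeta>^2))"
  have holH: "Hf holomorphic_on ball 0 \<rho>1"
    unfolding Hf_def by (intro holomorphic_intros holQ)
  have H0: "Hf 0 = of_real (h * \<rho>2^2)" by (simp add: Hf_def Q1_def)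
  have Hrel: "Hf \<zeta> = (G (inverse \<zeta>) - inverse \<zeta>) * (cnj \<zeta> - \<zeta>)" if "norm \<zeta> = \<rho>2" for \<zeta> :: complex
  proof -
    have \<zeta>0: "\<zeta> \<noteq> 0" using that r2 by auto
    have "of_real (\<rho>2^2) = \<zeta> * cnj \<zeta>" using complex_norm_square[of \<zeta>] that by simp
    then show ?thesis using \<zeta>0 by (simp add: Hf_def Q1_def f_def power2_eq_square field_simps)
  qed
  have Hpos_sph: "Re (Hf \<zeta>) \<ge> 0" if "norm \<zeta> = \<rho>2" for \<zeta> :: complex
  proof -
    have \<zeta>0: "\<zeta> \<noteq> 0" using that r2 by auto
    define z where "z = inverse \<zeta>"
    define A where "A = G z - z"
    have "norm z > R1" using inv_out[of \<zeta>] that r12 \<zeta>0 by (simp add: z_def)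
    then have s: "Im z * Im A \<le> 0" using sign by (simp add: A_def)
    have imz: "Im z = - Im \<zeta> / (norm \<zeta>)^2"
      by (simp add: z_def inverse_eq_divide Im_divide cmod_power2)
    have "Im \<zeta> * Im A \<ge> 0"
    proof -
      have "- (Im \<zeta> * Im A) / (norm \<zeta>)^2 \<le> 0" using s imz by simp
      then show ?thesis using \<zeta>0 by (simp add: zero_le_divide_iff)
    qed
    moreover have "Re (Hf \<zeta>) = 2 * (Im \<zeta> * Im A)"
      using Hrel[OF that] by (simp add: A_def z_def)
    ultimately show ?thesis by simp
  qed
  have Hpos: "Re (Hf \<zeta>) \<ge> 0" if "\<zeta> \<in> cball 0 \<rho>2" for \<zeta> :: complex
  proof -
    have cb: "cball 0 \<rho>2 \<subseteq> ball 0 \<rho>1" using r12 by auto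
    have "norm (exp (- Hf \<zeta>)) \<le> 1"
    proof (rule maximum_modulus_frontier[of "\<lambda>\<zeta>. exp (- Hf \<zeta>)" "cball 0 \<rho>2"])
      show "(\<lambda>\<zeta>. exp (- Hf \<zeta>)) holomorphic_on interior (cball 0 \<rho>2)"
      proof -
        have "interior (cball (0::complex) \<rho>2) \<subseteq> ball 0 \<rho>1" using r12 by auto
        then have "Hf holomorphic_on interior (cball 0 \<rho>2)" using holH holomorphic_on_subset by blast
        then show ?thesis by (intro holomorphic_intros)
      qed
      show "continuous_on (closure (cball 0 \<rho>2)) (\<lambda>\<zeta>. exp (- Hf \<zeta>))"
        using holomorphic_on_imp_continuous_on[OF holH] cb
        by (auto intro!: continuous_intros intro: continuous_on_subset)
      show "bounded (cball (0::complex) \<rho>2)" by simp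
      show "norm (exp (- Hf w)) \<le> 1" if "w \<in> frontier (cball 0 \<rho>2)" for w
        using Hpos_sph[of w] that r2 by simp
      show "\<zeta> \<in> cball 0 \<rho>2" by (rule that)
    qed
    then show ?thesis by simp
  qed
  have h0: "h \<ge> 0"
  proof -
    have "Re (Hf 0) \<ge> 0" using Hpos r2 by simp
    then have "h * \<rho>2^2 \<ge> 0" using H0 by simp
    then show ?thesis using r2 by (simp add: zero_le_mult_iff)
  qed
  have sch: "(1 - norm \<zeta> / \<rho>2) * norm (Hf \<zeta> - of_real (h * \<rho>2^2)) \<le> 2 * (h * \<rho>2^2) * (norm \<zeta> / \<rho>2)"
    if "norm \<zeta> < \<rho>2" for \<zeta> :: complex
  proof (rule schwarz_re_bound[of Hf \<rho>2 "h * \<rho>2^2" \<zeta>])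
    show "Hf holomorphic_on ball 0 \<rho>2" using holH r12 by (auto intro: holomorphic_on_subset)
    show "Re (Hf \<zeta>) \<ge> 0" if "\<zeta> \<in> ball 0 \<rho>2" for \<zeta> using Hpos that by auto
    show "h * \<rho>2^2 \<ge> 0" using h0 by simp
  qed (use r2 H0 that in auto)
  have main: "(1 - R / norm z) * ((1/R)^2 - (1/norm z)^2) * norm (G z - z - of_real h / z)
           \<le> (1 / norm z) * (2 * (h * (1/R)^2) * (R / norm z) + (1 - R / norm z) * h * (1/norm z)^2)"
    if zR: "norm z > R" for z :: complex
  proof -
    define \<zeta> where "\<zeta> = inverse z"
    have z0: "z \<noteq> 0" using zR R R1 by auto
    have n\<zeta>: "norm \<zeta> = 1 / norm z" by (simp add: \<zeta>_def norm_inverse divide_inverse)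
    have \<zeta>0: "\<zeta> \<noteq> 0" using z0 by (simp add: \<zeta>_def)
    have \<zeta>r2: "norm \<zeta> < \<rho>2" using zR R R1 n\<zeta> by (simp add: \<rho>2_def frac_less2)
    have q: "norm \<zeta> / \<rho>2 = R / norm z" using n\<zeta> by (simp add: \<rho>2_def)
    have q1: "1 - R / norm z \<ge> 0" using zR R R1 by (simp add: divide_le_eq_1)
    define E where "E = G z - z - of_real h / z"
    have HQ: "Hf \<zeta> = (G z - z) * z * (of_real (\<rho>2^2) - \<zeta>^2)"
      using \<zeta>0 by (simp add: Hf_def Q1_def f_def \<zeta>_def divide_inverse mult_ac)
    have Eq: "(of_real (\<rho>2^2) - \<zeta>^2) * E = \<zeta> * ((Hf \<zeta> - of_real (h * \<rho>2^2)) + of_real h * \<zeta>^2)"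
      unfolding HQ E_def using z0 by (simp add: \<zeta>_def field_simps power2_eq_square)
    have nd: "norm (of_real (\<rho>2^2) - \<zeta>^2 :: complex) \<ge> \<rho>2^2 - (norm \<zeta>)^2"
    proof -
      have "norm (of_real (\<rho>2^2) :: complex) - norm (\<zeta>^2) \<le> norm (of_real (\<rho>2^2) - \<zeta>^2 :: complex)"
        by (rule norm_triangle_ineq2)
      then show ?thesis by (simp add: norm_power)
    qed
    have nd0: "\<rho>2^2 - (norm \<zeta>)^2 \<ge> 0" using \<zeta>r2 by (simp add: power_mono)
    have "(\<rho>2^2 - (norm \<zeta>)^2) * norm E \<le> norm (of_real (\<rho>2^2) - \<zeta>^2 :: complex) * norm E"
      using nd by (intro mult_right_mono) auto
    also have "\<dots> = norm \<zeta> * norm ((Hf \<zeta> - of_real (h * \<rho>2^2)) + of_real h * \<zeta>^2)"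
      using Eq by (metis norm_mult)
    also have "\<dots> \<le> norm \<zeta> * (norm (Hf \<zeta> - of_real (h * \<rho>2^2)) + h * (norm \<zeta>)^2)"
      using h0 by (intro mult_left_mono) (auto intro!: order.trans[OF norm_triangle_ineq] simp: norm_mult norm_power)
    finally have A: "(\<rho>2^2 - (norm \<zeta>)^2) * norm E \<le> norm \<zeta> * (norm (Hf \<zeta> - of_real (h * \<rho>2^2)) + h * (norm \<zeta>)^2)" .
    have "(1 - R / norm z) * ((\<rho>2^2 - (norm \<zeta>)^2) * norm E)
        \<le> (1 - R / norm z) * (norm \<zeta> * (norm (Hf \<zeta> - of_real (h * \<rho>2^2)) + h * (norm \<zeta>)^2))"
      using A q1 by (rule mult_left_mono)
    also have "\<dots> = norm \<zeta> * ((1 - norm \<zeta> / \<rho>2) * norm (Hf \<zeta> - of_real (h * \<rho>2^2)) + (1 - R / norm z) * h * (norm \<zeta>)^2)"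
      using q by (simp add: algebra_simps)
    also have "\<dots> \<le> norm \<zeta> * (2 * (h * \<rho>2^2) * (norm \<zeta> / \<rho>2) + (1 - R / norm z) * h * (norm \<zeta>)^2)"
      using sch[OF \<zeta>r2] by (intro mult_left_mono add_right_mono) auto
    finally show ?thesis using n\<zeta> q by (simp add: E_def \<rho>2_def mult.assoc)
  qed
  show ?thesis using h0 main by blast
qed

lemma arith_a:
  fixes m R h e :: real
  assumes m1: "6/5 \<le> m" and m2: "m \<le> 2" and R0: "0 < R" and R1: "R \<le> 1/50" and h0: "h \<ge> 0" and e0: "e \<ge> 0"
    and hyp: "(1 - R/m) * ((1/R)^2 - (1/m)^2) * e \<le> (1/m) * (2*(h*(1/R)^2)*(R/m) + (1 - R/m)*h*(1/m)^2)"
  shows "e \<le> 9 * h * R"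
proof -
  have m0: "m > 0" using m1 by simp
  have D: "R^2 * m^4 > 0" using m0 R0 by simp
  have L: "(1 - R/m) * ((1/R)^2 - (1/m)^2) * e = ((m-R)*(m^2-R^2)*m*e) / (R^2*m^4)"
    using m0 R0 by (simp add: field_simps power2_eq_square power4_eq_xxxx)
  have Rr: "(1/m) * (2*(h*(1/R)^2)*(R/m) + (1 - R/m)*h*(1/m)^2) = (2*h*R*m^2 + (m-R)*h*R^2) / (R^2*m^4)"
    using m0 R0 by (simp add: field_simps power2_eq_square power4_eq_xxxx)
  have A: "(m-R)*(m^2-R^2)*m*e \<le> 2*h*R*m^2 + (m-R)*h*R^2"
    using hyp D unfolding L Rr by (simp add: divide_le_cancel)
  have f1: "m - R \<ge> 1" using m1 R1 by simp
  have f2: "m^2 - R^2 \<ge> 1"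
  proof -
    have "m^2 \<ge> (6/5)^2" using m1 by (intro power_mono) auto
    moreover have "R^2 \<le> (1/50)^2" using R0 R1 by (intro power_mono) auto
    ultimately show ?thesis by (simp add: power2_eq_square)
  qed
  have "1 * 1 * 1 \<le> (m-R)*(m^2-R^2)*m" using f1 f2 m1 by (intro mult_mono) auto
  then have "1 * e \<le> ((m-R)*(m^2-R^2)*m) * e" using e0 by (intro mult_right_mono) auto
  then have "e \<le> (m-R)*(m^2-R^2)*m*e" by simp
  also have "\<dots> \<le> 2*h*R*m^2 + (m-R)*h*R^2" by (rule A)
  also have "\<dots> \<le> 2*h*R*4 + 2*h*R*(1/50)"
  proof (intro add_mono)
    have "m^2 \<le> 2^2" using m2 m0 by (intro power_mono) auto
    then show "2*h*R*m^2 \<le> 2*h*R*4" using h0 R0 by (intro mult_left_mono) auto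
    have "(m-R)*h*R^2 = (m - R) * (h*R) * R" by (simp add: power2_eq_square)
    also have "\<dots> \<le> 2 * (h*R) * (1/50)"
      using m2 R0 R1 h0 by (intro mult_mono) auto
    finally show "(m-R)*h*R^2 \<le> 2*h*R*(1/50)" by simp
  qed
  also have "\<dots> \<le> 9 * h * R" using h0 R0 by simp
  finally show ?thesis .
qed

lemma arith_b:
  fixes R h e :: real
  assumes R0: "0 < R" and h0: "h \<ge> 0" and e0: "e \<ge> 0"
    and hyp: "(1 - R/(4*R)) * ((1/R)^2 - (1/(4*R))^2) * e \<le> (1/(4*R)) * (2*(h*(1/R)^2)*(R/(4*R)) + (1 - R/(4*R))*h*(1/(4*R))^2)"
    and im: "4 * R - h / (4 * R) + e > 0"
  shows "h \<le> 72 * R^2"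
proof -
  have L: "(1 - R/(4*R)) * ((1/R)^2 - (1/(4*R))^2) * e = (45/64) * e / R^2"
    using R0 by (simp add: field_simps power2_eq_square)
  have Rr: "(1/(4*R)) * (2*(h*(1/R)^2)*(R/(4*R)) + (1 - R/(4*R))*h*(1/(4*R))^2) = (35/256) * h / R^3"
    using R0 by (simp add: field_simps power2_eq_square power3_eq_cube)
  have "(45/64) * e / R^2 \<le> (35/256) * h / R^3" using hyp unfolding L Rr .
  then have "(45/64) * e * R \<le> (35/256) * h"
    using R0 by (simp add: field_simps power2_eq_square power3_eq_cube)
  then have e1: "e * R \<le> (7/36) * h" by (simp add: mult.commute mult.left_commute)
  have "h / (4 * R) < 4 * R + e" using im by simp
  then have "h < 16 * R^2 + 4 * e * R" using R0 by (simp add: field_simps power2_eq_square)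
  then show ?thesis using e1 by simp
qed

lemma lim_lin:
  fixes X k r b :: real
  assumes "0 \<le> k" "r < b" and H: "\<And>R. r < R \<Longrightarrow> R \<le> b \<Longrightarrow> X \<le> k * R"
  shows "X \<le> k * r"
proof (rule field_le_epsilon)
  fix e :: real assume e: "e > 0"
  define R where "R = r + min (b - r) (e / (k + 1))"
  have Rr: "r < R" "R \<le> b" using assms e by (auto simp: R_def)
  have "X \<le> k * R" using H Rr by blast
  also have "\<dots> = k * r + k * min (b - r) (e / (k + 1))" by (simp add: R_def algebra_simps)
  also have "k * min (b - r) (e / (k + 1)) \<le> k * (e / (k + 1))"
    using assms by (intro mult_left_mono) auto
  also have "k * (e / (k + 1)) \<le> e" using assms e by (simp add: field_simps)
  finally show "X \<le> k * r + e" by simp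
qed

lemma lim_sq:
  fixes X k r b :: real
  assumes k0: "0 \<le> k" and r0: "0 \<le> r" and rb: "r < b" and H: "\<And>R. r < R \<Longrightarrow> R \<le> b \<Longrightarrow> X \<le> k * R^2"
  shows "X \<le> k * r^2"
proof (rule field_le_epsilon)
  fix e :: real assume e: "e > 0"
  define M where "M = k * (2 * r + 1) + 1"
  have M0: "M > 0" using k0 r0 by (simp add: M_def add_nonneg_pos)
  define \<delta> where "\<delta> = min (b - r) (min 1 (e / M))"
  have d0: "\<delta> > 0" using rb e M0 by (simp add: \<delta>_def)
  have d1: "\<delta> \<le> 1" "\<delta> \<le> e / M" "\<delta> \<le> b - r" by (auto simp: \<delta>_def)
  have "X \<le> k * (r + \<delta>)^2" using H[of "r + \<delta>"] d0 d1 by simp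
  also have "\<dots> = k * r^2 + k * \<delta> * (2 * r + \<delta>)" by (simp add: power2_eq_square algebra_simps)
  also have "k * \<delta> * (2 * r + \<delta>) \<le> k * \<delta> * (2 * r + 1)"
    using k0 d0 d1 by (intro mult_left_mono) auto
  also have "\<dots> \<le> \<delta> * M" using k0 d0 r0 by (simp add: M_def algebra_simps)
  also have "\<dots> \<le> (e / M) * M" using d1 M0 by (intro mult_right_mono) auto
  also have "\<dots> = e" using M0 by simp
  finally show "X \<le> k * r^2 + e" by simp
qed

lemma bnd_term: "\<bar>r\<bar> \<le> 1 \<Longrightarrow> \<bar>c * (t * r)\<bar> \<le> \<bar>c\<bar> * \<bar>t::real\<bar>"
proof -
  assume "\<bar>r\<bar> \<le> 1"
  then have "\<bar>c\<bar> * \<bar>t\<bar> * \<bar>r\<bar> \<le> \<bar>c\<bar> * \<bar>t\<bar>" by (intro mult_left_le) auto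
  then show ?thesis by (simp add: abs_mult mult.assoc)
qed

lemma bnd_add: "\<bar>x\<bar> \<le> X \<Longrightarrow> \<bar>y\<bar> \<le> Y \<Longrightarrow> \<bar>x + y::real\<bar> \<le> X + Y"
  by (simp add: abs_triangle_ineq order_trans[OF abs_triangle_ineq] add_mono)

lemma mono1_one: "\<bar>(1::real)\<bar> \<le> 1" by simp

lemma mono1_mult: "\<bar>x\<bar> \<le> 1 \<Longrightarrow> \<bar>y\<bar> \<le> 1 \<Longrightarrow> \<bar>x * y::real\<bar> \<le> 1"
  by (simp add: abs_mult mult_le_one)

lemma mono1_pow: "\<bar>x::real\<bar> \<le> 1 \<Longrightarrow> \<bar>x ^ n\<bar> \<le> 1"
  by (simp add: power_abs power_le_one)

lemmas mono1 = mono1_one mono1_mult mono1_pow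

lemma N_bound:
  fixes V h a b :: real
  assumes "\<bar>V\<bar> \<le> 1" "\<bar>h\<bar> \<le> 1" "\<bar>a\<bar> \<le> 1" "\<bar>b\<bar> \<le> 1"
  shows "\<bar>2*(1 - h/2 + b)^2 - (1 + V/2 + V^2/8 - h/2)^2 * ((1 + h/2 - V + a)^2 + (1 - h/2 + b)^2)\<bar> \<le> (481/32::real) * \<bar>a\<bar> + (257/16::real) * \<bar>b\<bar> + (497/128::real) * \<bar>h^2\<bar> + (145/64::real) * \<bar>V * h\<bar> + (41/64::real) * \<bar>V^3\<bar>"
proof -
  have e: "2*(1 - h/2 + b)^2 - (1 + V/2 + V^2/8 - h/2)^2 * ((1 + h/2 - V + a)^2 + (1 - h/2 + b)^2) = ((2::real) * ((b) * (1)) + ((1::real) * ((b) * (b)) + ((-2::real) * ((a) * (1)) + ((-1::real) * ((a) * (a)) + ((1::real) * ((b) * (h)) + ((1::real) * ((b) * (h * b)) + ((1::real) * ((a) * (h)) + ((1::real) * ((a) * (h * a)) + ((-1/2::real) * ((h^2) * (1)) + ((-3/2::real) * ((b) * (h^2)) + ((-1/4::real) * ((b) * (h^2 * b)) + ((1/2::real) * ((a) * (h^2)) + ((-1/4::real) * ((a) * (h^2 * a)) + ((1/2::real) * ((h^2) * (h)) + ((1/4::real) * ((b) * (h^3)) + ((-1/4::real) * ((a) * (h^3)) + ((-1/8::real) * ((h^2) * (h^2)) + ((-2::real) * ((b) * (V)) + ((-1::real) * ((b) * (V * b)) + ((-1::real) * ((a) * (V * a)) + ((2::real) * ((b) * (V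 * h)) + ((1/2::real) * ((b) * (V * h * b)) + ((-2::real) * ((a) * (V * h)) + ((1/2::real) * ((a) * (V * h * a)) + ((-1::real) * ((h^2) * (V)) + ((-1/2::real) * ((b) * (V * h^2)) + ((1::real) * ((a) * (V * h^2)) + ((1/2::real) * ((h^2) * (V * h)) + ((-1::real) * ((b) * (V^2)) + ((-1/2::real) * ((b) * (V^2 * b)) + ((1::real) * ((a) * (V^2)) + ((-1/2::real) * ((a) * (V^2 * a)) + ((5/4::real) * ((V * h) * (V)) + ((3/4::real) * ((b) * (V^2 * h)) + ((1/8::real) * ((b) * (V^2 * h * b)) + ((-5/4::real) * ((a) * (V^2 * h)) + ((1/8::real) * ((a) * (V^2 * h * a)) + ((-1::real) * ((h^2) * (V^2)) + ((-1/8::real) * ((b) * (V^2 * h^2)) + ((1/8::real) * ((a) * (V^2 * h^2)) + ((1/16::real) * ((h^2) * (V^2 * h)) + ((-1/4::real) * ((V^3) * (1)) + ((-1/4::real) * ((b) * (V^3)) + ((-1/8::real) * ((b) * (V^3 * b)) + ((3/4::real) * ((a) * (V^3)) + ((-1/8::real) * ((a) * (V^3 * a)) + ((3/4::real) * ((V * h) * (V^2)) + ((1/8::real) * ((b) * (V^3 * h)) + ((-3/8::real) * ((a) * (V^3 * h)) + ((-3/16::real) * ((h^2) * (V^3)) + ((-9/32::real) * ((V^3) * (V)) + ((-1/32::real) * ((b) * (V^4)) + ((-1/64::real) * ((b) * (V^4 * b)) + ((7/32::real) * ((a) * (V^4)) + ((-1/64::real) * ((a) * (V^4 * a)) + ((1/4::real)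 * ((V * h) * (V^3)) + ((1/64::real) * ((b) * (V^4 * h)) + ((-1/64::real) * ((a) * (V^4 * h)) + ((-1/128::real) * ((h^2) * (V^4)) + ((-3/32::real) * ((V^3) * (V^2)) + ((1/32::real) * ((a) * (V^5)) + ((1/64::real) * ((V * h) * (V^4)) + (-1/64::real) * ((V^3) * (V^3))))))))))))))))))))))))))))))))))))))))))))))))))))))))))))))))"
    by (simp add: field_simps eval_nat_numeral)
  have "\<bar>((2::real) * ((b) * (1)) + ((1::real) * ((b) * (b)) + ((-2::real) * ((a) * (1)) + ((-1::real) * ((a) * (a)) + ((1::real) * ((b) * (h)) + ((1::real) * ((b) * (h * b)) + ((1::real) * ((a) * (h)) + ((1::real) * ((a) * (h * a)) + ((-1/2::real) * ((h^2) * (1)) + ((-3/2::real) * ((b) * (h^2)) + ((-1/4::real) * ((b) * (h^2 * b)) + ((1/2::real) * ((a) * (h^2)) + ((-1/4::real) * ((a) * (h^2 * a)) + ((1/2::real) * ((h^2) * (h)) + ((1/4::real) * ((b) * (h^3)) + ((-1/4::real) * ((a) * (h^3)) + ((-1/8::real) * ((h^2) * (h^2)) + ((-2::real) * ((b) * (V)) + ((-1::real) * ((b) * (V * b)) + ((-1::real) * ((a) * (V * a)) + ((2::real) * ((b) * (V * h)) + ((1/2::real) * ((b) * (V * h * b)) + ((-2::real) * ((a) * (V * h)) + ((1/2::real) * ((a) * (V * h * a)) + ((-1::real) * ((h^2) * (V)) + ((-1/2::real) * ((b) * (V * h^2)) + ((1::real) * ((a) * (V * h^2)) + ((1/2::real)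 * ((h^2) * (V * h)) + ((-1::real) * ((b) * (V^2)) + ((-1/2::real) * ((b) * (V^2 * b)) + ((1::real) * ((a) * (V^2)) + ((-1/2::real) * ((a) * (V^2 * a)) + ((5/4::real) * ((V * h) * (V)) + ((3/4::real) * ((b) * (V^2 * h)) + ((1/8::real) * ((b) * (V^2 * h * b)) + ((-5/4::real) * ((a) * (V^2 * h)) + ((1/8::real) * ((a) * (V^2 * h * a)) + ((-1::real) * ((h^2) * (V^2)) + ((-1/8::real) * ((b) * (V^2 * h^2)) + ((1/8::real) * ((a) * (V^2 * h^2)) + ((1/16::real) * ((h^2) * (V^2 * h)) + ((-1/4::real) * ((V^3) * (1)) + ((-1/4::real) * ((b) * (V^3)) + ((-1/8::real) * ((b) * (V^3 * b)) + ((3/4::real) * ((a) * (V^3)) + ((-1/8::real) * ((a) * (V^3 * a)) + ((3/4::real) * ((V * h) * (V^2)) + ((1/8::real) * ((b) * (V^3 * h)) + ((-3/8::real) * ((a) * (V^3 * h)) + ((-3/16::real) * ((h^2) * (V^3)) + ((-9/32::real) * ((V^3) * (V)) + ((-1/32::real) * ((b) * (V^4)) + ((-1/64::real) * ((b) * (V^4 * b)) + ((7/32::real) * ((a) * (V^4)) + ((-1/64::real) * ((a) * (V^4 * a)) + ((1/4::real) * ((V * h) * (V^3)) + ((1/64::real) * ((b) * (V^4 * h)) + ((-1/64::real) * ((a) * (V^4 * h)) + ((-1/128::real) * ((h^2) * (V^4)) + ((-3/32::real) * ((V^3) * (V^2)) + ((1/32::real) * ((a) * (V^5)) + ((1/64::real)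 * ((V * h) * (V^4)) + (-1/64::real) * ((V^3) * (V^3))))))))))))))))))))))))))))))))))))))))))))))))))))))))))))))))\<bar> \<le> (\<bar>(2::real)\<bar> * \<bar>b\<bar> + (\<bar>(1::real)\<bar> * \<bar>b\<bar> + (\<bar>(-2::real)\<bar> * \<bar>a\<bar> + (\<bar>(-1::real)\<bar> * \<bar>a\<bar> + (\<bar>(1::real)\<bar> * \<bar>b\<bar> + (\<bar>(1::real)\<bar> * \<bar>b\<bar> + (\<bar>(1::real)\<bar> * \<bar>a\<bar> + (\<bar>(1::real)\<bar> * \<bar>a\<bar> + (\<bar>(-1/2::real)\<bar> * \<bar>h^2\<bar> + (\<bar>(-3/2::real)\<bar> * \<bar>b\<bar> + (\<bar>(-1/4::real)\<bar> * \<bar>b\<bar> + (\<bar>(1/2::real)\<bar> * \<bar>a\<bar> + (\<bar>(-1/4::real)\<bar> * \<bar>a\<bar> + (\<bar>(1/2::real)\<bar> * \<bar>h^2\<bar> + (\<bar>(1/4::real)\<bar> * \<bar>b\<bar> + (\<bar>(-1/4::real)\<bar> * \<bar>a\<bar> + (\<bar>(-1/8::real)\<bar> * \<bar>h^2\<bar> + (\<bar>(-2::real)\<bar> * \<bar>b\<bar> + (\<bar>(-1::real)\<bar> * \<bar>b\<bar> + (\<bar>(-1::real)\<bar> * \<bar>a\<bar> + (\<bar>(2::real)\<bar> * \<bar>b\<bar> + (\<bar>(1/2::real)\<bar> * \<bar>b\<bar> + (\<bar>(-2::real)\<bar> * \<bar>a\<bar> + (\<bar>(1/2::real)\<bar>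 * \<bar>a\<bar> + (\<bar>(-1::real)\<bar> * \<bar>h^2\<bar> + (\<bar>(-1/2::real)\<bar> * \<bar>b\<bar> + (\<bar>(1::real)\<bar> * \<bar>a\<bar> + (\<bar>(1/2::real)\<bar> * \<bar>h^2\<bar> + (\<bar>(-1::real)\<bar> * \<bar>b\<bar> + (\<bar>(-1/2::real)\<bar> * \<bar>b\<bar> + (\<bar>(1::real)\<bar> * \<bar>a\<bar> + (\<bar>(-1/2::real)\<bar> * \<bar>a\<bar> + (\<bar>(5/4::real)\<bar> * \<bar>V * h\<bar> + (\<bar>(3/4::real)\<bar> * \<bar>b\<bar> + (\<bar>(1/8::real)\<bar> * \<bar>b\<bar> + (\<bar>(-5/4::real)\<bar> * \<bar>a\<bar> + (\<bar>(1/8::real)\<bar> * \<bar>a\<bar> + (\<bar>(-1::real)\<bar> * \<bar>h^2\<bar> + (\<bar>(-1/8::real)\<bar> * \<bar>b\<bar> + (\<bar>(1/8::real)\<bar> * \<bar>a\<bar> + (\<bar>(1/16::real)\<bar> * \<bar>h^2\<bar> + (\<bar>(-1/4::real)\<bar> * \<bar>V^3\<bar> + (\<bar>(-1/4::real)\<bar> * \<bar>b\<bar> + (\<bar>(-1/8::real)\<bar> * \<bar>b\<bar> + (\<bar>(3/4::real)\<bar> * \<bar>a\<bar> + (\<bar>(-1/8::real)\<bar> * \<bar>a\<bar> + (\<bar>(3/4::real)\<bar> * \<bar>V * h\<bar> + (\<bar>(1/8::real)\<bar> * \<bar>b\<bar> + (\<bar>(-3/8::real)\<bar> * \<bar>a\<bar>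 + (\<bar>(-3/16::real)\<bar> * \<bar>h^2\<bar> + (\<bar>(-9/32::real)\<bar> * \<bar>V^3\<bar> + (\<bar>(-1/32::real)\<bar> * \<bar>b\<bar> + (\<bar>(-1/64::real)\<bar> * \<bar>b\<bar> + (\<bar>(7/32::real)\<bar> * \<bar>a\<bar> + (\<bar>(-1/64::real)\<bar> * \<bar>a\<bar> + (\<bar>(1/4::real)\<bar> * \<bar>V * h\<bar> + (\<bar>(1/64::real)\<bar> * \<bar>b\<bar> + (\<bar>(-1/64::real)\<bar> * \<bar>a\<bar> + (\<bar>(-1/128::real)\<bar> * \<bar>h^2\<bar> + (\<bar>(-3/32::real)\<bar> * \<bar>V^3\<bar> + (\<bar>(1/32::real)\<bar> * \<bar>a\<bar> + (\<bar>(1/64::real)\<bar> * \<bar>V * h\<bar> + \<bar>(-1/64::real)\<bar> * \<bar>V^3\<bar>))))))))))))))))))))))))))))))))))))))))))))))))))))))))))))))"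
    by (intro bnd_add bnd_term mono1 assms)
  also have "\<dots> = (481/32::real) * \<bar>a\<bar> + (257/16::real) * \<bar>b\<bar> + (497/128::real) * \<bar>h^2\<bar> + (145/64::real) * \<bar>V * h\<bar> + (41/64::real) * \<bar>V^3\<bar>"
    by (simp add: algebra_simps)
  finally show ?thesis unfolding e .
qed

lemma T_est:
  fixes V h a b :: real
  assumes V: "\<bar>V\<bar> \<le> 1/10" and h0: "0 \<le> h" and h1: "h \<le> 1/100" and a: "\<bar>a\<bar> \<le> 1/100" and b: "\<bar>b\<bar> \<le> 1/100"
  shows "\<bar>sqrt 2 * (1 - h/2 + b) / sqrt ((1 + h/2 - V + a)^2 + (1 - h/2 + b)^2) - (1 + V/2 + V^2/8 - h/2)\<bar>
    \<le> 4 * ((481/32::real) * \<bar>a\<bar> + (257/16::real) * \<bar>b\<bar> + (497/128::real) * \<bar>h^2\<bar> + (145/64::real) * \<bar>V * h\<bar> + (41/64::real) * \<bar>V^3\<bar>)"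
proof -
  define X where "X = 1 + h/2 - V + a"
  define Y where "Y = 1 - h/2 + b"
  define P where "P = 1 + V/2 + V^2/8 - h/2"
  define S where "S = X^2 + Y^2"
  define T where "T = sqrt 2 * Y / sqrt S"
  define N where "N = 2*Y^2 - P^2 * S"
  have Nb: "\<bar>N\<bar> \<le> (481/32::real) * \<bar>a\<bar> + (257/16::real) * \<bar>b\<bar> + (497/128::real) * \<bar>h^2\<bar> + (145/64::real) * \<bar>V * h\<bar> + (41/64::real) * \<bar>V^3\<bar>"
    unfolding N_def S_def X_def Y_def P_def using assms by (intro N_bound) auto
  have Y1: "Y \<ge> 9/10" using h1 b by (simp add: Y_def abs_le_iff)
  have S1: "S \<ge> 1/2"
  proof -
    have "Y^2 \<ge> (9/10)^2" using Y1 by (intro power_mono) auto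
    moreover have "X^2 \<ge> 0" by simp
    moreover have "(9/10::real)^2 = 81/100" by (simp add: power2_eq_square)
    ultimately show ?thesis unfolding S_def by linarith
  qed
  have P1: "P \<ge> 1/2"
  proof -
    have "V^2 \<ge> 0" by simp
    moreover have "V \<ge> -1/10" using V by (simp add: abs_le_iff)
    ultimately show ?thesis using h1 unfolding P_def by linarith
  qed
  have T0: "T \<ge> 0" using Y1 S1 by (simp add: T_def)
  have T2: "T^2 = 2 * Y^2 / S"
    using S1 by (simp add: T_def power_divide power_mult_distrib)
  have "T^2 - P^2 = N / S" using S1 by (simp add: T2 N_def field_simps)
  then have "(T - P) * (T + P) = N / S" by (simp add: power2_eq_square algebra_simps)
  then have e1: "\<bar>(T - P) * (T + P)\<bar> = \<bar>N / S\<bar>" by simp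
  have e2: "\<bar>(T - P) * (T + P)\<bar> = \<bar>T - P\<bar> * (T + P)" using T0 P1 by (simp add: abs_mult)
  have e3: "\<bar>N / S\<bar> = \<bar>N\<bar> / S" using S1 by simp
  have "\<bar>T - P\<bar> * (T + P) = \<bar>N\<bar> / S" using e1 e2 e3 by simp
  moreover have "\<bar>N\<bar> / S \<le> 2 * \<bar>N\<bar>"
  proof -
    have "\<bar>N\<bar> * 1 \<le> \<bar>N\<bar> * (2 * S)" using S1 by (intro mult_left_mono) auto
    then show ?thesis using S1 by (simp add: divide_le_eq mult.commute mult.left_commute)
  qed
  ultimately have "\<bar>T - P\<bar> * (T + P) \<le> 2 * \<bar>N\<bar>" by simp
  moreover have "\<bar>T - P\<bar> * (1/2) \<le> \<bar>T - P\<bar> * (T + P)" using T0 P1 by (intro mult_left_mono) auto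
  ultimately have "\<bar>T - P\<bar> \<le> 4 * \<bar>N\<bar>" by simp
  then show ?thesis using Nb unfolding T_def X_def Y_def P_def S_def by simp
qed

lemma core_bounds:
  assumes hull: "is_hull K" and gK: "is_gK K g h" and rr: "hull_rad K \<le> 1/100"
  shows "hull_rad K \<ge> 0 \<and> h \<ge> 0 \<and> h \<le> 72 * (hull_rad K)^2
    \<and> g holomorphic_on (UHP - K) \<and> open (UHP - K) \<and> g ` (UHP - K) = UHP
    \<and> (\<forall>z. Im z > 0 \<longrightarrow> norm z > hull_rad K \<longrightarrow> z \<in> UHP - K)
    \<and> (\<forall>\<xi>. Im \<xi> > 0 \<longrightarrow> 6/5 \<le> norm \<xi> \<longrightarrow> norm \<xi> \<le> 2 \<longrightarrow> norm (g \<xi> - \<xi> - of_real h / \<xi>) \<le> 9 * h * hull_rad K)"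
proof -
  define r where "r = hull_rad K"
  define D where "D = UHP - K"
  have KH: "K \<subseteq> UHP" and bK: "bounded K" and cK: "closure K \<inter> UHP = K"
    using hull by (auto simp: is_hull_def)
  have bdd: "bdd_above (insert 0 (norm ` K))"
  proof -
    obtain a where "\<forall>x\<in>K. norm x \<le> a" using bK bounded_iff by blast
    then have "\<forall>y\<in>insert 0 (norm ` K). y \<le> max a 0" by auto
    then show ?thesis by (meson bdd_aboveI)
  qed
  have r0: "r \<ge> 0" unfolding r_def hull_rad_def by (rule cSup_upper[OF _ bdd]) simp
  have Kr: "norm z \<le> r" if "z \<in> K" for z
    unfolding r_def hull_rad_def by (rule cSup_upper[OF _ bdd]) (use that in auto)
  have UHP: "UHP = {z. Im z > 0}" by (simp add: UHP_def)
  have oD: "open D"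
  proof -
    have "D = UHP \<inter> - closure K" using cK by (auto simp: D_def)
    then show ?thesis by (auto simp: UHP intro!: open_Int open_halfspace_Im_gt)
  qed
  have big: "z \<in> D" if "Im z > 0" "norm z > r" for z
    using that Kr by (force simp: D_def UHP)
  have DH: "D \<subseteq> {w. Im w > 0}" by (auto simp: D_def UHP)
  have holg: "g holomorphic_on D" and inj: "inj_on g D" and img: "g ` D = {w. Im w > 0}"
    using gK by (auto simp: is_gK_def D_def UHP)
  obtain C Rx where CR: "\<forall>z\<in>D. norm z \<ge> Rx \<longrightarrow> norm (g z - z - of_real h / z) \<le> C / (norm z)^2"
    using gK by (auto simp: is_gK_def D_def)
  have img': "Im (g z) > 0" if "z \<in> D" for z using img that by auto
  have asym: "\<exists>R. \<forall>z\<in>D. norm z \<ge> R \<longrightarrow> norm (g z - z) \<le> \<epsilon>" if e: "\<epsilon> > 0" for \<epsilon>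
  proof -
    define R where "R = max Rx (max 1 ((\<bar>h\<bar> + \<bar>C\<bar>) / \<epsilon>))"
    show ?thesis
    proof (intro exI ballI impI)
      fix z assume zD: "z \<in> D" and zR: "norm z \<ge> R"
      have z1: "norm z \<ge> 1" and zx: "norm z \<ge> Rx" and z2: "norm z \<ge> (\<bar>h\<bar> + \<bar>C\<bar>) / \<epsilon>"
        using zR by (auto simp: R_def)
      have z0: "norm z > 0" using z1 by linarith
      have "norm (g z - z) \<le> norm (g z - z - of_real h / z) + norm (of_real h / z)"
        by (metis diff_add_cancel norm_triangle_ineq)
      also have "\<dots> \<le> C / (norm z)^2 + \<bar>h\<bar> / norm z"
        using CR zD zx by (intro add_mono) (auto simp: norm_divide)
      also have "C / (norm z)^2 \<le> \<bar>C\<bar> / norm z"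
      proof -
        have "C / (norm z)^2 \<le> \<bar>C\<bar> / (norm z)^2" using z0 by (intro divide_right_mono) auto
        also have "\<dots> \<le> \<bar>C\<bar> / norm z"
          using z1 z0 by (intro divide_left_mono) (auto simp: power2_eq_square)
        finally show ?thesis .
      qed
      also have "\<bar>C\<bar> / norm z + \<bar>h\<bar> / norm z = (\<bar>h\<bar> + \<bar>C\<bar>) / norm z" by (simp add: add_divide_distrib)
      also have "\<dots> \<le> \<epsilon>" using z2 z0 e by (simp add: divide_le_eq mult.commute pos_divide_le_eq)
      finally show "norm (g z - z) \<le> \<epsilon>" by simp
    qed
  qed
  have gle: "Im (g z) \<le> Im z" if "z \<in> D" for z
    by (rule im_g_le[OF oD holg inj img DH big asym that]) auto
  have per: "h \<ge> 0 \<and> h \<le> 72 * Rr^2 \<and>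
      (\<forall>\<xi>. Im \<xi> > 0 \<longrightarrow> 6/5 \<le> norm \<xi> \<longrightarrow> norm \<xi> \<le> 2 \<longrightarrow> norm (g \<xi> - \<xi> - of_real h / \<xi>) \<le> 9 * h * Rr)"
    if Rr: "r < Rr" "Rr \<le> 1/50" for Rr
  proof -
    define R1 where "R1 = (r + Rr) / 2"
    have R1r: "R1 > r" and R10: "R1 > 0" and R1R: "Rr > R1" using Rr r0 by (auto simp: R1_def)
    obtain G where holG: "G holomorphic_on {z. norm z > R1}"
      and Gp: "\<And>z. norm z > R1 \<Longrightarrow> Im z > 0 \<Longrightarrow> G z = g z"
      and Gm: "\<And>z. norm z > R1 \<Longrightarrow> Im z < 0 \<Longrightarrow> G z = cnj (g (cnj z))"
      using reflect_ext[OF holg oD img' big gle r0 R1r] by metis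
    have asyG: "norm (G z - z - of_real h / z) \<le> max C 0 / (norm z)^2"
      if z: "norm z > R1" "norm z \<ge> Rx" "Im z \<noteq> 0" for z
    proof (cases "Im z > 0")
      case True
      then have "z \<in> D" using big z R1r by auto
      then have "norm (g z - z - of_real h / z) \<le> C / (norm z)^2" using CR z by blast
      also have "\<dots> \<le> max C 0 / (norm z)^2" by (intro divide_right_mono) auto
      finally show ?thesis using Gp[OF z(1) True] by simp
    next
      case False
      then have neg: "Im z < 0" using z by simp
      have cz: "cnj z \<in> D" using big[of "cnj z"] neg z R1r by auto
      have "norm (g (cnj z) - cnj z - of_real h / cnj z) \<le> C / (norm (cnj z))^2" using CR cz z by auto
      also have "\<dots> \<le> max C 0 / (norm z)^2" by (simp only: complex_mod_cnj) (intro divide_right_mono; auto)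
      also have "norm (g (cnj z) - cnj z - of_real h / cnj z) = norm (G z - z - of_real h / z)"
      proof -
        have "G z - z - of_real h / z = cnj (g (cnj z) - cnj z - of_real h / cnj z)"
          using Gm[OF z(1) neg] by simp
        then show ?thesis by (metis complex_mod_cnj)
      qed
      finally show ?thesis .
    qed
    have signG: "Im z * Im (G z - z) \<le> 0" if z: "norm z > R1" for z
    proof -
      consider "Im z > 0" | "Im z < 0" | "Im z = 0" by linarith
      then show ?thesis
      proof cases
        case 1
        then have "z \<in> D" using big z R1r by auto
        then have "Im (G z - z) \<le> 0" using gle Gp[OF z 1] by simp
        then show ?thesis using 1 by (simp add: mult_nonneg_nonpos)
      next
        case 2
        have cz: "cnj z \<in> D" using big[of "cnj z"] 2 z R1r by auto
        have "Im (G z - z) \<ge> 0" using gle[OF cz] Gm[OF z 2] by simp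
        then show ?thesis using 2 by (simp add: mult_nonpos_nonneg)
      next
        case 3 then show ?thesis by simp
      qed
    qed
    have GB: "h \<ge> 0 \<and> (\<forall>z. norm z > Rr \<longrightarrow> (1 - Rr / norm z) * ((1/Rr)^2 - (1/norm z)^2) * norm (G z - z - of_real h / z)
           \<le> (1 / norm z) * (2 * (h * (1/Rr)^2) * (Rr / norm z) + (1 - Rr / norm z) * h * (1/norm z)^2))"
      by (rule G_bound[OF holG R10 _ asyG signG R1R]) auto
    then have h0: "h \<ge> 0" by blast
    have Rr0: "Rr > 0" using Rr r0 by simp
    have Eb: "norm (g \<xi> - \<xi> - of_real h / \<xi>) \<le> 9 * h * Rr"
      if \<xi>: "Im \<xi> > 0" "6/5 \<le> norm \<xi>" "norm \<xi> \<le> 2" for \<xi>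
    proof -
      have n: "norm \<xi> > Rr" using \<xi> Rr by simp
      have Gx: "G \<xi> = g \<xi>" using Gp[of \<xi>] n R1R \<xi> by simp
      have H0: "(1 - Rr / norm \<xi>) * ((1/Rr)^2 - (1/norm \<xi>)^2) * norm (G \<xi> - \<xi> - of_real h / \<xi>)
           \<le> (1 / norm \<xi>) * (2 * (h * (1/Rr)^2) * (Rr / norm \<xi>) + (1 - Rr / norm \<xi>) * h * (1/norm \<xi>)^2)"
        using GB n by blast
      show ?thesis
        by (rule arith_a[OF \<xi>(2,3) Rr0 Rr(2) h0 norm_ge_zero]) (use H0 in \<open>simp only: Gx\<close>)
    qed
    have Hb: "h \<le> 72 * Rr^2"
    proof -
      define z where "z = of_real (4 * Rr) * \<i>"
      have nz: "norm z = 4 * Rr" using Rr0 by (simp add: z_def norm_mult)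
      have iz: "Im z = 4 * Rr" by (simp add: z_def)
      have zD: "z \<in> D" using big[of z] nz iz Rr0 Rr by simp
      have Gz: "G z = g z" using Gp[of z] nz iz R1R Rr0 by simp
      define E where "E = g z - z - of_real h / z"
      have nR: "norm z > Rr" using nz Rr0 by simp
      have H0: "(1 - Rr / norm z) * ((1/Rr)^2 - (1/norm z)^2) * norm (G z - z - of_real h / z)
           \<le> (1 / norm z) * (2 * (h * (1/Rr)^2) * (Rr / norm z) + (1 - Rr / norm z) * h * (1/norm z)^2)"
        using GB nR by blast
      have hyp: "(1 - Rr/(4*Rr)) * ((1/Rr)^2 - (1/(4*Rr))^2) * norm E \<le> (1/(4*Rr)) * (2*(h*(1/Rr)^2)*(Rr/(4*Rr)) + (1 - Rr/(4*Rr))*h*(1/(4*Rr))^2)"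
        using H0 unfolding nz Gz E_def .
      have ih: "Im (of_real h / z) = - h / (4*Rr)"
        using Rr0 by (simp add: z_def Im_divide power2_eq_square)
      have "g z = z + of_real h / z + E" by (simp add: E_def)
      then have "Im (g z) = 4 * Rr - h / (4 * Rr) + Im E" using iz ih by simp
      moreover have "Im E \<le> norm E" using abs_Im_le_cmod[of E] by simp
      moreover have "Im (g z) > 0" using img' zD by blast
      ultimately have im: "4 * Rr - h / (4 * Rr) + norm E > 0" by linarith
      show ?thesis by (rule arith_b[OF Rr0 h0 norm_ge_zero hyp im])
    qed
    show ?thesis using h0 Hb Eb by blast
  qed
  have rb: "r < 1/50" using rr by (simp add: r_def)
  have h0: "h \<ge> 0" using per[of "1/50"] rb by simp
  have hb: "h \<le> 72 * r^2"
    by (rule lim_sq[OF _ r0 rb]) (use per in auto)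
  have Eb: "norm (g \<xi> - \<xi> - of_real h / \<xi>) \<le> 9 * h * r"
    if "Im \<xi> > 0" "6/5 \<le> norm \<xi>" "norm \<xi> \<le> 2" for \<xi>
  proof -
    have "norm (g \<xi> - \<xi> - of_real h / \<xi>) \<le> (9 * h) * r"
      by (rule lim_lin[OF _ rb]) (use per that h0 in auto)
    then show ?thesis by simp
  qed
  show ?thesis
    using r0 h0 hb holg oD img big Eb unfolding r_def D_def UHP by auto
qed

lemma powr_third_cube:
  assumes "0 \<le> (x::real)"
  shows "(x powr (1/3))^3 = x"
proof (cases "x = 0")
  case True then show ?thesis by simp
next
  case False
  then have x0: "x > 0" using assms by simp
  have "(x powr (1/3))^3 = (x powr (1/3)) powr (real 3)"
    using x0 by (subst powr_realpow) auto
  also have "\<dots> = x" using x0 by (simp add: powr_powr)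
  finally show ?thesis .
qed

lemma div_aux: "(Y / q) / (c / 2) = (2 / c) * Y / (q::real)"
  by (simp add: divide_divide_eq_left divide_divide_eq_right mult.commute)

lemma sqrt2_bounds: "7/5 \<le> sqrt (2::real)" "sqrt (2::real) \<le> 3/2"
proof -
  show "7/5 \<le> sqrt (2::real)" by (rule real_le_rsqrt) (simp add: power2_eq_square)
  show "sqrt (2::real) \<le> 3/2" by (rule real_le_lsqrt) (auto simp: power2_eq_square)
qed

lemma final:
  assumes hull: "is_hull K" and gK: "is_gK K g h" and rr: "hull_rad K \<le> 1/100"
    and U: "\<bar>U\<bar> \<le> (hull_rad K * h) powr (1/3)" and s: "s \<in> {-1, 1::real}"
  shows "\<bar>Im (g (\<i> + of_real s)) - (1 - h / 2)\<bar> \<le> 2000 * (h * hull_rad K) \<and>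
        \<bar>norm (deriv g (\<i> + of_real s)) - 1\<bar> \<le> 2000 * (h * hull_rad K) \<and>
        \<bar>sin (Arg (g (\<i> + of_real s) - of_real U)) / (sqrt 2 / 2)
           - (1 + s * U / 2 + U^2 / 8 - h / 2)\<bar> \<le> 2000 * (h * hull_rad K + (hull_rad K)^3)"
proof -
  define r where "r = hull_rad K"
  define D where "D = UHP - K"
  define z0 where "z0 = \<i> + of_real s"
  have CB: "r \<ge> 0 \<and> h \<ge> 0 \<and> h \<le> 72 * r^2
    \<and> g holomorphic_on D \<and> open D \<and> g ` D = UHP
    \<and> (\<forall>z. Im z > 0 \<longrightarrow> norm z > r \<longrightarrow> z \<in> D)
    \<and> (\<forall>\<xi>. Im \<xi> > 0 \<longrightarrow> 6/5 \<le> norm \<xi> \<longrightarrow> norm \<xi> \<le> 2 \<longrightarrow> norm (g \<xi> - \<xi> - of_real h / \<xi>) \<le> 9 * h * r)"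
    using core_bounds[OF hull gK rr] unfolding r_def D_def .
  then have r0: "r \<ge> 0" and h0: "h \<ge> 0" and hb: "h \<le> 72 * r^2" and holg: "g holomorphic_on D"
    and oD: "open D" and img: "g ` D = UHP" and big: "\<And>z. Im z > 0 \<Longrightarrow> norm z > r \<Longrightarrow> z \<in> D"
    and Eb: "\<And>\<xi>. Im \<xi> > 0 \<Longrightarrow> 6/5 \<le> norm \<xi> \<Longrightarrow> norm \<xi> \<le> 2 \<Longrightarrow> norm (g \<xi> - \<xi> - of_real h / \<xi>) \<le> 9 * h * r"
    by blast+
  have r1: "r \<le> 1/100" using rr by (simp add: r_def)
  have hr0: "h * r \<ge> 0" using h0 r0 by simp
  have s2: "s^2 = 1" and sa: "\<bar>s\<bar> = 1" using s by auto
  have hr: "h \<le> r"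
  proof -
    have "72 * r^2 = (72 * r) * r" by (simp add: power2_eq_square)
    also have "\<dots> \<le> 1 * r" using r0 r1 by (intro mult_right_mono) auto
    finally show ?thesis using hb by simp
  qed
  have h2: "h^2 \<le> h * r" using hr h0 by (simp add: power2_eq_square mult_left_mono)
  have U3: "\<bar>U\<bar>^3 \<le> r * h"
  proof -
    have "\<bar>U\<bar>^3 \<le> ((r * h) powr (1/3))^3" using U by (intro power_mono) (auto simp: r_def)
    also have "\<dots> = r * h" using r0 h0 by (intro powr_third_cube) simp
    finally show ?thesis .
  qed
  have U5: "\<bar>U\<bar> \<le> 5 * r"
  proof -
    have "\<bar>U\<bar>^3 \<le> r * (72 * r^2)" using U3 hb r0 by (meson order.trans mult_left_mono)
    also have "\<dots> \<le> (5 * r)^3" using r0 by (simp add: power3_eq_cube power2_eq_square)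
    finally have "\<bar>U\<bar>^Suc 2 \<le> (5 * r)^Suc 2" by simp
    then show ?thesis by (rule power_le_imp_le_base) (use r0 in simp)
  qed
  have nz0: "norm z0 = sqrt 2" using s2 by (simp add: z0_def cmod_def power2_eq_square)
  have iz0: "Im z0 = 1" and rz0: "Re z0 = s" by (simp_all add: z0_def)
  have z0ne: "z0 \<noteq> 0" using iz0 by auto
  have z0inv: "of_real h / z0 = of_real (h * s / 2) - \<i> * of_real (h / 2)"
  proof -
    have "z0 * (of_real s - \<i>) = 2" using s2 by (simp add: z0_def complex_eq_iff power2_eq_square)
    then have "1 / z0 = (of_real s - \<i>) / 2" using z0ne by (simp add: field_simps)
    then have "of_real h / z0 = of_real h * ((of_real s - \<i>) / 2)" by (metis times_divide_eq_right mult.right_neutral)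
    then show ?thesis by (simp add: field_simps)
  qed
  have s75: "7/5 \<le> sqrt (2::real)" and s32: "sqrt (2::real) \<le> 3/2" by (rule sqrt2_bounds)+
  define E0 where "E0 = g z0 - z0 - of_real h / z0"
  have E0b: "norm E0 \<le> 9 * h * r" unfolding E0_def using Eb[of z0] iz0 nz0 s75 s32 by simp
  have gz0: "g z0 = z0 + of_real h / z0 + E0" by (simp add: E0_def)
  have z0D: "z0 \<in> D" using big[of z0] iz0 nz0 s75 r1 by simp
  have Imgz0: "Im (g z0) > 0" using img z0D by (auto simp: UHP_def)
  have est1: "\<bar>Im (g z0) - (1 - h / 2)\<bar> \<le> 2000 * (h * r)"
  proof -
    have "Im (g z0) - (1 - h / 2) = Im E0" unfolding gz0 z0inv using iz0 by simp
    also have "\<bar>Im E0\<bar> \<le> norm E0" by (rule abs_Im_le_cmod)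
    also have "\<dots> \<le> 9 * h * r" by (rule E0b)
    also have "\<dots> \<le> 2000 * (h * r)" using hr0 by simp
    finally show ?thesis .
  qed
  have est3: "\<bar>sin (Arg (g z0 - of_real U)) / (sqrt 2 / 2) - (1 + s * U / 2 + U^2 / 8 - h / 2)\<bar> \<le> 2000 * (h * r + r^3)"
  proof -
    define w where "w = g z0 - of_real U"
    define V where "V = s * U"
    define a where "a = s * Re E0"
    define b where "b = Im E0"
    define X where "X = 1 + h/2 - V + a"
    define Y where "Y = 1 - h/2 + b"
    have Imw: "Im w = Y" unfolding w_def gz0 z0inv Y_def b_def using iz0 by simp
    have Rew: "Re w = s * X" unfolding w_def gz0 z0inv X_def V_def a_def using rz0 s2
      by (simp add: algebra_simps power2_eq_square)
    have Yp: "Y > 0" using Imgz0 Imw by (simp add: w_def)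
    have w0: "w \<noteq> 0" using Yp Imw by auto
    have nw: "norm w = sqrt (X^2 + Y^2)" using Rew Imw s2 by (simp add: cmod_def power_mult_distrib)
    have "sin (Arg w) / (sqrt 2 / 2) = sqrt 2 * Y / sqrt (X^2 + Y^2)"
    proof -
      define q where "q = sqrt (X^2 + Y^2)"
      have "norm w > 0" using w0 by simp
      then have q0: "q > 0" using nw by (simp add: q_def)
      have sA: "sin (Arg w) = Y / q" using sin_Arg_eq[OF w0] Imw nw by (simp add: q_def)
      have s2': "2 / sqrt 2 = sqrt (2::real)" by (simp add: real_div_sqrt)
      have "(Y / q) / (sqrt 2 / 2) = (2 / sqrt 2) * Y / q" by (rule div_aux)
      then show ?thesis unfolding sA s2' q_def .
    qed
    moreover have "1 + s * U / 2 + U^2 / 8 - h / 2 = 1 + V/2 + V^2/8 - h/2"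
      using s2 by (simp add: V_def power_mult_distrib)
    ultimately have eq: "sin (Arg (g z0 - of_real U)) / (sqrt 2 / 2) - (1 + s * U / 2 + U^2 / 8 - h / 2)
        = sqrt 2 * (1 - h/2 + b) / sqrt ((1 + h/2 - V + a)^2 + (1 - h/2 + b)^2) - (1 + V/2 + V^2/8 - h/2)"
      by (simp add: w_def X_def Y_def)
    have aV: "\<bar>V\<bar> = \<bar>U\<bar>" using sa by (simp add: V_def abs_mult)
    have ab: "\<bar>a\<bar> \<le> 9 * h * r" using sa abs_Re_le_cmod[of E0] E0b by (simp add: a_def abs_mult)
    have bb: "\<bar>b\<bar> \<le> 9 * h * r" using abs_Im_le_cmod[of E0] E0b by (simp add: b_def)
    have small: "9 * h * r \<le> 1/100"
    proof -
      have "h * r \<le> (1/100) * (1/100)" using h0 r0 hr r1 by (intro mult_mono) auto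
      then show ?thesis by simp
    qed
    have T: "\<bar>sqrt 2 * (1 - h/2 + b) / sqrt ((1 + h/2 - V + a)^2 + (1 - h/2 + b)^2) - (1 + V/2 + V^2/8 - h/2)\<bar>
      \<le> 4 * ((481/32::real) * \<bar>a\<bar> + (257/16::real) * \<bar>b\<bar> + (497/128::real) * \<bar>h^2\<bar> + (145/64::real) * \<bar>V * h\<bar> + (41/64::real) * \<bar>V^3\<bar>)"
      by (rule T_est) (use aV U5 r1 h0 hr ab bb small in linarith)+
    have b1: "\<bar>h^2\<bar> \<le> h * r" using h2 by simp
    have b2: "\<bar>V * h\<bar> \<le> 5 * (h * r)"
    proof -
      have "\<bar>V * h\<bar> = \<bar>U\<bar> * h" using aV h0 by (simp add: abs_mult)
      also have "\<dots> \<le> (5 * r) * h" using U5 h0 by (intro mult_right_mono) auto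
      finally show ?thesis by (simp add: mult_ac)
    qed
    have b3: "\<bar>V^3\<bar> \<le> h * r" using U3 aV by (simp add: power_abs mult.commute)
    have "4 * ((481/32::real) * \<bar>a\<bar> + (257/16::real) * \<bar>b\<bar> + (497/128::real) * \<bar>h^2\<bar> + (145/64::real) * \<bar>V * h\<bar> + (41/64::real) * \<bar>V^3\<bar>)
       \<le> 2000 * (h * r)"
    proof -
      have ab': "\<bar>a\<bar> \<le> 9 * (h * r)" and bb': "\<bar>b\<bar> \<le> 9 * (h * r)" using ab bb by (simp_all add: mult.assoc)
      have "(481/32::real) * \<bar>a\<bar> + (257/16::real) * \<bar>b\<bar> + (497/128::real) * \<bar>h^2\<bar> + (145/64::real) * \<bar>V * h\<bar> + (41/64::real) * \<bar>V^3\<bar>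
        \<le> (481/32::real) * (9 * (h * r)) + (257/16::real) * (9 * (h * r)) + (497/128::real) * (h * r) + (145/64::real) * (5 * (h * r)) + (41/64::real) * (h * r)"
        using ab' bb' b1 b2 b3 by (intro add_mono mult_left_mono) auto
      then have F1: "4 * ((481/32::real) * \<bar>a\<bar> + (257/16::real) * \<bar>b\<bar> + (497/128::real) * \<bar>h^2\<bar> + (145/64::real) * \<bar>V * h\<bar> + (41/64::real) * \<bar>V^3\<bar>)
        \<le> 4 * ((481/32::real) * (9 * (h * r)) + (257/16::real) * (9 * (h * r)) + (497/128::real) * (h * r) + (145/64::real) * (5 * (h * r)) + (41/64::real) * (h * r))"
        by (rule mult_left_mono) simp
      have F2: "4 * ((481/32::real) * (9 * (h * r)) + (257/16::real) * (9 * (h * r)) + (497/128::real) * (h * r) + (145/64::real) * (5 * (h * r)) + (41/64::real) * (h * r)) \<le> 2000 * (h * r)"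
        using hr0 by (simp add: algebra_simps)
      show ?thesis by (rule order.trans[OF F1 F2])
    qed
    also have "\<dots> \<le> 2000 * (h * r + r^3)" using r0 by simp
    finally have B: "4 * ((481/32::real) * \<bar>a\<bar> + (257/16::real) * \<bar>b\<bar> + (497/128::real) * \<bar>h^2\<bar> + (145/64::real) * \<bar>V * h\<bar> + (41/64::real) * \<bar>V^3\<bar>)
       \<le> 2000 * (h * r + r^3)" .
    show ?thesis unfolding eq by (rule order.trans[OF T B])
  qed
  have est2: "\<bar>norm (deriv g z0) - 1\<bar> \<le> 2000 * (h * r)"
  proof -
    define \<phi> where "\<phi> = (\<lambda>\<xi>. g \<xi> - \<xi> - of_real h / \<xi>)"
    have cbD: "cball z0 (1/10) \<subseteq> D - {0}"
    proof
      fix \<xi> assume "\<xi> \<in> cball z0 (1/10)"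
      then have d: "norm (z0 - \<xi>) \<le> 1/10" by (simp add: dist_norm)
      have "Im z0 - Im \<xi> \<le> norm (z0 - \<xi>)" using abs_Im_le_cmod[of "z0 - \<xi>"] by simp
      then have "Im \<xi> > 0" using d iz0 by simp
      moreover have "norm z0 - norm (z0 - \<xi>) \<le> norm \<xi>"
        by (metis add_diff_cancel_left' diff_diff_eq2 norm_triangle_ineq2)
      then have "norm \<xi> > r" using d nz0 s75 r1 by simp
      ultimately show "\<xi> \<in> D - {0}" using big by auto
    qed
    have holphi: "\<phi> holomorphic_on D - {0}"
      unfolding \<phi>_def by (intro holomorphic_intros holomorphic_on_subset[OF holg]) auto
    have oD0: "open (D - {0})" using oD by auto
    have hb1: "\<phi> holomorphic_on ball z0 (1/10)"
      using holphi cbD by (meson ball_subset_cball holomorphic_on_subset subset_trans)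
    have cb1: "continuous_on (cball z0 (1/10)) \<phi>"
      using holomorphic_on_imp_continuous_on[OF holphi] cbD continuous_on_subset by blast
    have bd: "norm (\<phi> x) \<le> 9 * h * r" if "norm (z0 - x) = 1/10" for x
    proof -
      have "Im z0 - Im x \<le> norm (z0 - x)" using abs_Im_le_cmod[of "z0 - x"] by simp
      then have ix: "Im x > 0" using that iz0 by simp
      have "norm z0 - norm (z0 - x) \<le> norm x"
        by (metis add_diff_cancel_left' diff_diff_eq2 norm_triangle_ineq2)
      then have n1: "6/5 \<le> norm x" using that nz0 s75 by simp
      have "norm x \<le> norm z0 + norm (x - z0)" by (metis add.commute diff_add_cancel norm_triangle_ineq)
      then have n2: "norm x \<le> 2" using that nz0 s32 by (simp add: norm_minus_commute)
      show ?thesis unfolding \<phi>_def using Eb[OF ix n1 n2] .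
    qed
    have "norm ((deriv ^^ 1) \<phi> z0) \<le> fact 1 * (9 * h * r) / (1/10) ^ 1"
      by (rule Cauchy_inequality[OF hb1 cb1 _ bd]) auto
    then have dphi: "norm (deriv \<phi> z0) \<le> 90 * (h * r)" by simp
    have dg: "(g has_field_derivative deriv g z0) (at z0)"
      using holg oD z0D by (intro holomorphic_derivI) auto
    have "(\<phi> has_field_derivative (deriv g z0 - 1 + of_real h / z0^2)) (at z0)"
      unfolding \<phi>_def using z0ne
      by (auto intro!: derivative_eq_intros dg simp: field_simps power2_eq_square)
    then have dv: "deriv \<phi> z0 = deriv g z0 - 1 + of_real h / z0^2" by (rule DERIV_imp_deriv)
    have z02: "of_real h / z0^2 = - (\<i> * of_real (h * s / 2))"
    proof -
      have "z0^2 * (- \<i> * of_real s) = 2" using s2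
        by (simp add: z0_def power2_eq_square algebra_simps complex_eq_iff)
      then have "1 / z0^2 = (- \<i> * of_real s) / 2" using z0ne by (simp add: field_simps)
      then have "of_real h / z0^2 = of_real h * ((- \<i> * of_real s) / 2)" by (metis times_divide_eq_right mult.right_neutral)
      then show ?thesis by (simp add: field_simps)
    qed
    define A where "A = 1 + \<i> * of_real (h * s / 2)"
    define d where "d = deriv \<phi> z0"
    have gA: "deriv g z0 = A + d" unfolding d_def dv z02 A_def by simp
    have nA1: "norm A \<ge> 1"
    proof -
      have "Re A = 1" by (simp add: A_def)
      then show ?thesis using abs_Re_le_cmod[of A] by simp
    qed
    have nA2: "norm A \<le> 1 + h^2 / 8"
    proof (rule power2_le_imp_le)
      have "norm A ^ 2 = 1 + h^2 * s^2 / 4" unfolding cmod_power2 by (simp add: A_def power2_eq_square)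
      also have "\<dots> = 1 + h^2 / 4" using s2 by simp
      also have "\<dots> \<le> (1 + h^2 / 8)^2" using h0 by (simp add: power2_eq_square algebra_simps)
      finally show "norm A ^ 2 \<le> (1 + h^2 / 8)^2" .
      show "0 \<le> 1 + h^2 / 8" by simp
    qed
    have "norm (A + d) \<le> norm A + norm d" by (rule norm_triangle_ineq)
    moreover have "norm A - norm d \<le> norm (A + d)" by (metis norm_diff_triangle_ineq norm_minus_cancel diff_minus_eq_add norm_triangle_ineq2 add_diff_cancel)
    ultimately have "\<bar>norm (A + d) - 1\<bar> \<le> h^2 / 8 + norm d" using nA1 nA2 by (simp add: abs_le_iff)
    also have "\<dots> \<le> h * r + 90 * (h * r)" using h2 dphi hr0 zero_le_power2[of h] unfolding d_def by linarith
    also have "\<dots> \<le> 2000 * (h * r)" using hr0 by simp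
    finally show ?thesis using gA by simp
  qed
  show ?thesis using est1 est2 est3 by (simp add: z0_def r_def)
qed

theorem lemma2p7:
  "\<exists>r0 > 0. \<exists>c :: real. \<forall>K g h U.
     is_hull K \<longrightarrow> is_gK K g h \<longrightarrow> hull_rad K \<le> r0 \<longrightarrow>
     \<bar>U\<bar> \<le> (hull_rad K * h) powr (1/3) \<longrightarrow>
     (\<forall>s \<in> {-1, 1 :: real}.
        let r = hull_rad K; z = \<i> + of_real s in
        \<bar>Im (g z) - (1 - h / 2)\<bar> \<le> c * (h * r) \<and>
        \<bar>norm (deriv g z) - 1\<bar> \<le> c * (h * r) \<and>
        \<bar>sin (Arg (g z - of_real U)) / (sqrt 2 / 2)
           - (1 + s * U / 2 + U^2 / 8 - h / 2)\<bar> \<le> c * (h * r + r^3))"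
  apply (rule exI[of _ "1/100"])
  apply (rule conjI)
   apply simp
  apply (rule exI[of _ "2000"])
  apply (intro allI impI ballI)
  apply (unfold Let_def)
  apply (rule final)
      apply assumption+
  done

end
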